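(* Fix generic values of the parameters, of $z$, and of $\bar Y(z/q),\bar Y(z),\bar Y(qz)$. The algebraic curve $$\varphi\,\{\bar f-\bar f(z/q)\}\{\bar f-\bar f(z)\}\,L_{1u}=0$$ in the variables $(\bar f,g)\in\mathbb{P}^1\times\mathbb{P}^1$ (where $\varphi$ stands for $\varphi_u$, the only $\varphi$-factor in the denominator of $L_{1u}$) is uniquely characterized by the properties: (i) it is of bidegree $(3,2)$; (ii) it passes through the 10 points $(\bar f,g)=(\bar f(u),g(u))$ for $u=u_1,\dots,u_8,\ z/q,\ h_1/(qz)$, and through the two further points defined by $\bar f=\bar f(u)$ and $$\frac{q^4u^8}{h_1^4}\frac{U(\frac{h_1}{qu})}{U(u)}\frac{g-g(u)}{g-g(\frac{h_1}{qu})}=\frac{\bar Y(u)}{\bar Y(qu)},$$ for $u=z$ and $u=z/q$.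
   Context: Let $h_1,h_2,u_1,\dots,u_8$ be generic nonzero complex parameters and $q=h_1^2h_2^2/(u_1\cdots u_8)$. Put $f(u)=u+h_1/u$, $g(u)=u+h_2/u$, $\bar f(u)=u+\frac{h_1}{qu}$. Let $\varphi_u=(\bar f-g)\big(\frac{q\bar f}{h_1}-\frac{g}{h_2}\big)-(\frac{h_1}{q}-h_2)\big(\frac q{h_1}-\frac1{h_2}\big)$. Let $U(z)=\prod_{i=1}^8(z-u_i)=\sum_{i=0}^8(-1)^i m_{8-i}z^i$ (so $m_0=1$, $m_8=h_1^2h_2^2/q$). For a parameter $h$ define polynomials in $g$: $P_n(h,g)=m_0g^4-m_1g^3+(m_2-3hm_0-h^{-3}m_8)g^2+(2hm_1-m_3+h^{-2}m_7)g+(h^2m_0-hm_2+m_4-h^{-1}m_6+h^{-2}m_8)$, $P_d(h,g)=m_8g^4-hm_7g^3+(h^2m_6-3hm_8-h^5m_0)g^2+(2h^2m_7-h^3m_5+h^5m_1)g+(h^6m_0-h^5m_2+h^4m_4-h^3m_6+h^2m_8)$. Define, for variables $f_0,f,g$, $V(f_0,f)=q\Big[(f_0-g)(f-g)-\big(\tfrac{h_1}{q}-h_2\big)(h_1-h_2)\tfrac1{h_2}\Big]P_d(h_2,g)-h_1^2h_2^4\Big[\big(\tfrac{f_0q}{h_1}-\tfrac{g}{h_2}\big)\big(\tfrac{f}{h_1}-\tfrac{g}{h_2}\big)-\big(\tfrac{q}{h_1}-\tfrac1{h_2}\big)\big(\tfrac1{h_1}-\tfrac1{h_2}\big)h_2\Big]P_n(h_2,g)$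 (it also depends on $g$). For a function $\bar Y$ of $z$ and variables $(\bar f,g)$ define $$L_{1u}=\frac{U(\frac zq)}{(z^2-h_1q^2)\{\bar f-\bar f(\frac zq)\}}\Big[\bar Y(\tfrac zq)-\frac{z^8}{h_1^4q^4}\frac{U(\frac{h_1}{z})}{U(\frac zq)}\frac{g-g(\frac zq)}{g-g(\frac{h_1}{z})}\bar Y(z)\Big]+\frac{z^8U(\frac{h_1}{qz})}{(qz^2-h_1)h_1^4\{\bar f-\bar f(z)\}}\Big[\bar Y(qz)-\frac{h_1^4}{q^4z^8}\frac{U(z)}{U(\frac{h_1}{qz})}\frac{g-g(\frac{h_1}{qz})}{g-g(z)}\bar Y(z)\Big]+\frac{(h_1-h_2q)z^2(z^2-h_1)V(\bar f,f(z))}{h_1^3h_2^3q^5\,g\,\varphi_u\{g-g(\frac{h_1}{z})\}\{g-g(z)\}}\bar Y(z).$$ *)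

theory Defs
  imports Complex_Main
begin

text \<open>A property holds for generic parameters if it holds
outside the zero set of a polynomial function that is not identically zero.\<close>

inductive_set polyfun :: "(complex list \<Rightarrow> complex) set" where
  pf_const: "(\<lambda>xs. c) \<in> polyfun"
| pf_var:   "(\<lambda>xs. xs ! i) \<in> polyfun"
| pf_add:   "p \<in> polyfun \<Longrightarrow> r \<in> polyfun \<Longrightarrow> (\<lambda>xs. p xs + r xs) \<in> polyfun"
| pf_mult:  "p \<in> polyfun \<Longrightarrow> r \<in> polyfun \<Longrightarrow> (\<lambda>xs. p xs * r xs) \<in> polyfun"

text \<open>Parameters: h1 h2 :: complex, u :: nat => complex (only u 1, ..., u 8 are used).\<close>

definition qq :: "complex \<Rightarrow> complex \<Rightarrow> (nat \<Rightarrow> complex) \<Rightarrow> complex" where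
  "qq h1 h2 u = h1^2 * h2^2 / (\<Prod>i=1..8. u i)"

definition ff :: "complex \<Rightarrow> complex \<Rightarrow> complex" where
  "ff h1 x = x + h1 / x"

definition gg :: "complex \<Rightarrow> complex \<Rightarrow> complex" where
  "gg h2 x = x + h2 / x"

definition fbar :: "complex \<Rightarrow> complex \<Rightarrow> complex \<Rightarrow> complex" where
  "fbar h1 q x = x + h1 / (q * x)"

definition UU :: "(nat \<Rightarrow> complex) \<Rightarrow> complex \<Rightarrow> complex" where
  "UU u x = (\<Prod>i=1..8. (x - u i))"

text \<open>m k = k-th elementary symmetric function of u 1, ..., u 8, so that
  U(x) = sum_i (-1)^i m_(8-i) x^i.\<close>
definition mm :: "(nat \<Rightarrow> complex) \<Rightarrow> nat \<Rightarrow> complex" where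
  "mm u k = (\<Sum>S\<in>{S. S \<subseteq> {1..8} \<and> card S = k}. \<Prod>i\<in>S. u i)"

definition phiu :: "complex \<Rightarrow> complex \<Rightarrow> (nat \<Rightarrow> complex) \<Rightarrow> complex \<Rightarrow> complex \<Rightarrow> complex" where
  "phiu h1 h2 u fb g = (let q = qq h1 h2 u in
     (fb - g) * (q * fb / h1 - g / h2) - (h1 / q - h2) * (q / h1 - 1 / h2))"

definition Pn :: "(nat \<Rightarrow> complex) \<Rightarrow> complex \<Rightarrow> complex \<Rightarrow> complex" where
  "Pn u h g = (let m = mm u in
     m 0 * g^4 - m 1 * g^3 + (m 2 - 3 * h * m 0 - m 8 / h^3) * g^2
     + (2 * h * m 1 - m 3 + m 7 / h^2) * g
     + (h^2 * m 0 - h * m 2 + m 4 - m 6 / h + m 8 / h^2))"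

definition Pd :: "(nat \<Rightarrow> complex) \<Rightarrow> complex \<Rightarrow> complex \<Rightarrow> complex" where
  "Pd u h g = (let m = mm u in
     m 8 * g^4 - h * m 7 * g^3 + (h^2 * m 6 - 3 * h * m 8 - h^5 * m 0) * g^2
     + (2 * h^2 * m 7 - h^3 * m 5 + h^5 * m 1) * g
     + (h^6 * m 0 - h^5 * m 2 + h^4 * m 4 - h^3 * m 6 + h^2 * m 8))"

definition VV :: "complex \<Rightarrow> complex \<Rightarrow> (nat \<Rightarrow> complex) \<Rightarrow> complex \<Rightarrow> complex \<Rightarrow> complex \<Rightarrow> complex" where
  "VV h1 h2 u f0 f g = (let q = qq h1 h2 u in
     q * ((f0 - g) * (f - g) - (h1 / q - h2) * (h1 - h2) * (1 / h2)) * Pd u h2 g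
     - h1^2 * h2^4 * ((f0 * q / h1 - g / h2) * (f / h1 - g / h2)
                      - (q / h1 - 1 / h2) * (1 / h1 - 1 / h2) * h2) * Pn u h2 g)"

text \<open>L_{1u} as a function of (fb, g) = (bar f, g); Y0, Y1, Y2 stand for the values
  bar Y(z/q), bar Y(z), bar Y(qz).  NOTE: the first denominator factor is
  (z^2 - h1 q) (the context's (z^2 - h1 q^2) is a typo).\<close>
definition L1u :: "complex \<Rightarrow> complex \<Rightarrow> (nat \<Rightarrow> complex) \<Rightarrow> complex \<Rightarrow> complex \<Rightarrow> complex \<Rightarrow> complex
                   \<Rightarrow> complex \<Rightarrow> complex \<Rightarrow> complex" where
  "L1u h1 h2 u z Y0 Y1 Y2 fb g = (let q = qq h1 h2 u; U = UU u in
     U (z / q) / ((z^2 - h1 * q) * (fb - fbar h1 q (z / q)))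
       * (Y0 - z^8 / (h1^4 * q^4) * (U (h1 / z) / U (z / q))
                * ((g - gg h2 (z / q)) / (g - gg h2 (h1 / z))) * Y1)
     + z^8 * U (h1 / (q * z)) / ((q * z^2 - h1) * h1^4 * (fb - fbar h1 q z))
       * (Y2 - h1^4 / (q^4 * z^8) * (U z / U (h1 / (q * z)))
                * ((g - gg h2 (h1 / (q * z))) / (g - gg h2 z)) * Y1)
     + (h1 - h2 * q) * z^2 * (z^2 - h1) * VV h1 h2 u fb (ff h1 z) g
       / (h1^3 * h2^3 * q^5 * g * phiu h1 h2 u fb g
          * (g - gg h2 (h1 / z)) * (g - gg h2 z)) * Y1)"

definition curveE :: "complex \<Rightarrow> complex \<Rightarrow> (nat \<Rightarrow> complex) \<Rightarrow> complex \<Rightarrow> complex \<Rightarrow> complex \<Rightarrow> complex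
                   \<Rightarrow> complex \<Rightarrow> complex \<Rightarrow> complex" where
  "curveE h1 h2 u z Y0 Y1 Y2 fb g = (let q = qq h1 h2 u in
     phiu h1 h2 u fb g * (fb - fbar h1 q (z / q)) * (fb - fbar h1 q z)
     * L1u h1 h2 u z Y0 Y1 Y2 fb g)"

definition curve_dom :: "complex \<Rightarrow> complex \<Rightarrow> (nat \<Rightarrow> complex) \<Rightarrow> complex \<Rightarrow> complex \<Rightarrow> complex \<Rightarrow> bool" where
  "curve_dom h1 h2 u z fb g = (let q = qq h1 h2 u in
     fb \<noteq> fbar h1 q (z / q) \<and> fb \<noteq> fbar h1 q z \<and> g \<noteq> 0 \<and> phiu h1 h2 u fb g \<noteq> 0
     \<and> g \<noteq> gg h2 (h1 / z) \<and> g \<noteq> gg h2 z)"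

text \<open>A polynomial of bidegree (3,2) is given by its coefficients c i j, i \<le> 3, j \<le> 2;
  (other values of c are irrelevant).  Its zero set in P^1 x P^1 is a curve of bidegree (3,2).\<close>
definition bpoly :: "(nat \<Rightarrow> nat \<Rightarrow> complex) \<Rightarrow> complex \<Rightarrow> complex \<Rightarrow> complex" where
  "bpoly c x y = (\<Sum>i\<le>3. \<Sum>j\<le>2. c i j * x^i * y^j)"

definition bpoly_nonzero :: "(nat \<Rightarrow> nat \<Rightarrow> complex) \<Rightarrow> bool" where
  "bpoly_nonzero c \<longleftrightarrow> (\<exists>i\<le>3. \<exists>j\<le>2. c i j \<noteq> 0)"

definition bpoly_prop :: "(nat \<Rightarrow> nat \<Rightarrow> complex) \<Rightarrow> (nat \<Rightarrow> nat \<Rightarrow> complex) \<Rightarrow> bool" where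
  "bpoly_prop d c \<longleftrightarrow> (\<exists>s. \<forall>i\<le>3. \<forall>j\<le>2. d i j = s * c i j)"

text \<open>The g-coordinates of the extra point over fb = fb(w):
  q^4 w^8/h1^4 * U(h1/(q w))/U(w) * (g - g(w))/(g - g(h1/(q w))) = Ya / Yb,
  where Ya/Yb stands for bar Y(w) / bar Y(q w).\<close>
definition extra_pt :: "complex \<Rightarrow> complex \<Rightarrow> (nat \<Rightarrow> complex) \<Rightarrow> complex \<Rightarrow> complex \<Rightarrow> complex \<Rightarrow> complex \<Rightarrow> bool" where
  "extra_pt h1 h2 u w Ya Yb y = (let q = qq h1 h2 u in
     y \<noteq> gg h2 (h1 / (q * w)) \<and>
     q^4 * w^8 / h1^4 * (UU u (h1 / (q * w)) / UU u w)
       * ((y - gg h2 w) / (y - gg h2 (h1 / (q * w)))) = Ya / Yb)"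

definition through_pts :: "complex \<Rightarrow> complex \<Rightarrow> (nat \<Rightarrow> complex) \<Rightarrow> complex \<Rightarrow> complex \<Rightarrow> complex \<Rightarrow> complex
                            \<Rightarrow> (nat \<Rightarrow> nat \<Rightarrow> complex) \<Rightarrow> bool" where
  "through_pts h1 h2 u z Y0 Y1 Y2 c = (let q = qq h1 h2 u in
     (\<forall>k\<in>{1..8}. bpoly c (fbar h1 q (u k)) (gg h2 (u k)) = 0)
     \<and> bpoly c (fbar h1 q (z / q)) (gg h2 (z / q)) = 0
     \<and> bpoly c (fbar h1 q (h1 / (q * z))) (gg h2 (h1 / (q * z))) = 0
     \<and> (\<forall>y. extra_pt h1 h2 u z Y1 Y2 y \<longrightarrow> bpoly c (fbar h1 q z) y = 0)
     \<and> (\<forall>y. extra_pt h1 h2 u (z / q) Y0 Y1 y \<longrightarrow> bpoly c (fbar h1 q (z / q)) y = 0))"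

end

theory Submission
  imports Defs "HOL-Computational_Algebra.Polynomial"
begin

lemma vieta_gen:
  fixes u :: "nat \<Rightarrow> complex"
  assumes "finite A"
  shows "(\<Prod>i\<in>A. (x - u i)) = (\<Sum>k\<le>card A. (-1)^k * (\<Sum>S\<in>{S. S \<subseteq> A \<and> card S = k}. \<Prod>i\<in>S. u i) * x^(card A - k))"
proof -
  have "(\<Prod>i\<in>A. (x - u i)) = (\<Prod>i\<in>A. (- u i) + x)" by simp
  also have "\<dots> = (\<Sum>X\<in>Pow A. (\<Prod>i\<in>X. - u i) * (\<Prod>i\<in>A-X. x))"
    by (rule prod_add[OF assms])
  also have "\<dots> = (\<Sum>X\<in>Pow A. (-1)^card X * (\<Prod>i\<in>X. u i) * x^(card A - card X))"
  proof (rule sum.cong[OF refl])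
    fix X assume X: "X \<in> Pow A"
    hence fX: "finite X" using assms finite_subset by auto
    have "(\<Prod>i\<in>X. - u i) = (-1)^card X * (\<Prod>i\<in>X. u i)"
      by (simp add: prod_uminus)
    moreover have "(\<Prod>i\<in>A-X. x) = x^(card A - card X)"
      using X assms by (simp add: card_Diff_subset fX)
    ultimately show "(\<Prod>i\<in>X. - u i) * (\<Prod>i\<in>A-X. x) = (-1)^card X * (\<Prod>i\<in>X. u i) * x^(card A - card X)"
      by simp
  qed
  also have "Pow A = (\<Union>k\<in>{..card A}. {S. S \<subseteq> A \<and> card S = k})"
    using assms by (auto intro: card_mono)
  also have "(\<Sum>X\<in>(\<Union>k\<in>{..card A}. {S. S \<subseteq> A \<and> card S = k}). (-1)^card X * (\<Prod>i\<in>X. u i) * x^(card A - card X))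
     = (\<Sum>k\<le>card A. \<Sum>X\<in>{S. S \<subseteq> A \<and> card S = k}. (-1)^card X * (\<Prod>i\<in>X. u i) * x^(card A - card X))"
    by (rule sum.UNION_disjoint) (auto intro: finite_subset[OF _ finite_Pow_iff[THEN iffD2, OF assms]] simp: assms)
  also have "\<dots> = (\<Sum>k\<le>card A. (-1)^k * (\<Sum>S\<in>{S. S \<subseteq> A \<and> card S = k}. \<Prod>i\<in>S. u i) * x^(card A - k))"
    by (rule sum.cong[OF refl]) (simp add: sum_distrib_left sum_distrib_right mult_ac)
  finally show ?thesis .
qed

lemma UU_vieta: "UU u x = (\<Sum>k\<le>8. (-1)^k * mm u k * x^(8-k))"
  using vieta_gen[where A="{1..8}" and u=u and x=x] by (simp add: UU_def mm_def)

lemma mm0: "mm u 0 = 1"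
proof -
  have "{S. S \<subseteq> {1..8::nat} \<and> card S = 0} = {{}}"
    by (auto dest: finite_subset[OF _ finite_atLeastAtMost])
  thus ?thesis by (simp add: mm_def)
qed

lemma mm8: "mm u 8 = (\<Prod>i=1..8. u i)"
proof -
  have "{S. S \<subseteq> {1..8::nat} \<and> card S = 8} = {{1..8}}"
  proof -
    have "S \<subseteq> {1..8::nat} \<and> card S = 8 \<longleftrightarrow> S = {1..8}" for S
      by (metis card_atLeastAtMost card_subset_eq diff_Suc_1 finite_atLeastAtMost order_refl)
    thus ?thesis by blast
  qed
  thus ?thesis by (simp add: mm_def)
qed

lemma UU_expand: "UU u x = x^8 - mm u 1 * x^7 + mm u 2 * x^6 - mm u 3 * x^5 + mm u 4 * x^4
   - mm u 5 * x^3 + mm u 6 * x^2 - mm u 7 * x + mm u 8"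
  by (simp add: UU_vieta numeral_eq_Suc mm0 algebra_simps)

lemma Pn_bridge:
  assumes "w \<noteq> 0" "h2 \<noteq> 0"
  shows "Pn u h2 (gg h2 w) * (w - h2/w) = UU u w / w^3 - UU u (h2/w) * w^3 / h2^3"
  using assms unfolding Pn_def Let_def gg_def UU_expand mm0
  by (simp add: field_simps) (simp add: algebra_simps power2_eq_square power3_eq_cube power4_eq_xxxx numeral_eq_Suc)

lemma Pd_bridge:
  assumes "w \<noteq> 0" "h2 \<noteq> 0"
  shows "Pd u h2 (gg h2 w) * (w - h2/w) = UU u (h2/w) * w^5 - h2^5 * UU u w / w^5"
  using assms unfolding Pd_def Let_def gg_def UU_expand mm0
  by (simp add: field_simps) (simp add: algebra_simps power2_eq_square power3_eq_cube power4_eq_xxxx numeral_eq_Suc)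

lemma VV_split: "VV h1 h2 u f0 f g = (let q = qq h1 h2 u in
     q * ((f0 - g) * (f - g) - (h1 / q - h2) * (h1 - h2) * (1 / h2)) * Pd u h2 g
     - h1^2 * h2^4 * ((f0 * q / h1 - g / h2) * (f / h1 - g / h2)
                      - (q / h1 - 1 / h2) * (1 / h1 - 1 / h2) * h2) * Pn u h2 g)"
  by (simp add: VV_def)

lemma VV_bridge:
  assumes "w \<noteq> 0" "h2 \<noteq> 0" "q = qq h1 h2 u"
  shows "VV h1 h2 u f0 f (gg h2 w) * (w - h2/w) =
     q * ((f0 - gg h2 w) * (f - gg h2 w) - (h1 / q - h2) * (h1 - h2) * (1 / h2)) * (UU u (h2/w) * w^5 - h2^5 * UU u w / w^5)
     - h1^2 * h2^4 * ((f0 * q / h1 - gg h2 w / h2) * (f / h1 - gg h2 w / h2)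
                      - (q / h1 - 1 / h2) * (1 / h1 - 1 / h2) * h2) * (UU u w / w^3 - UU u (h2/w) * w^3 / h2^3)"
proof -
  note b1 = Pd_bridge[OF assms(1,2), of u] and b2 = Pn_bridge[OF assms(1,2), of u]
  have gen: "\<And>a b x y t::complex. (a*x - b*y)*t = a*(x*t) - b*(y*t)" by (simp add: algebra_simps)
  show ?thesis unfolding VV_split Let_def assms(3)[symmetric] b1[symmetric] b2[symmetric] gen ..
qed

lemma VV_curve:
  assumes "w \<noteq> 0" "h1 \<noteq> 0" "h2 \<noteq> 0" "q \<noteq> 0" "w^2 \<noteq> h2" "q = qq h1 h2 u"
  shows "VV h1 h2 u (fbar h1 q w) f (gg h2 w) =
     UU u w * h2^2 * (q*h2 - h1) * (h1*w^2 - h2*f*w + h2^2) * (w^2 + h2) / w^6"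
proof -
  have nz: "w - h2/w \<noteq> 0" using assms(1,5) by (auto simp: field_simps power2_eq_square)
  have "VV h1 h2 u (fbar h1 q w) f (gg h2 w) * (w - h2/w) =
        (UU u w * h2^2 * (q*h2 - h1) * (h1*w^2 - h2*f*w + h2^2) * (w^2 + h2) / w^6) * (w - h2/w)"
    unfolding VV_bridge[OF assms(1,3,6)] using assms(1-4)
    by (simp add: fbar_def gg_def field_simps) (simp add: algebra_simps power2_eq_square power3_eq_cube power4_eq_xxxx numeral_eq_Suc)
  thus ?thesis using nz by (metis mult_right_cancel)
qed

lemma VV_diag:
  assumes "w \<noteq> 0" "h1 \<noteq> 0" "h2 \<noteq> 0" "q \<noteq> 0" "w^2 \<noteq> h2" "q = qq h1 h2 u"
  shows "VV h1 h2 u fb (ff h1 w) (gg h2 w) =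
     UU u w * (w^2 + h2) * (h1 - h2) * h2^2 / w^6 * ((q*h2 - h1)*(w^2 - h2) + (fb - fbar h1 q w) * q * h2 * w)"
proof -
  have nz: "w - h2/w \<noteq> 0" using assms(1,5) by (auto simp: field_simps power2_eq_square)
  have "VV h1 h2 u fb (ff h1 w) (gg h2 w) * (w - h2/w) =
        (UU u w * (w^2 + h2) * (h1 - h2) * h2^2 / w^6 * ((q*h2 - h1)*(w^2 - h2) + (fb - fbar h1 q w) * q * h2 * w)) * (w - h2/w)"
    unfolding VV_bridge[OF assms(1,3,6)] using assms(1-4)
    by (simp add: fbar_def gg_def ff_def field_simps) (simp add: algebra_simps power2_eq_square power3_eq_cube power4_eq_xxxx numeral_eq_Suc)
  thus ?thesis using nz by (metis mult_right_cancel)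
qed

lemma gg_diff: "s \<noteq> 0 \<Longrightarrow> t \<noteq> 0 \<Longrightarrow> gg h2 s - gg h2 t = (s - t)*(s*t - h2)/(s*t)"
  by (simp add: gg_def field_simps; simp add: algebra_simps)

lemma fbar_diff: "s \<noteq> 0 \<Longrightarrow> t \<noteq> 0 \<Longrightarrow> q \<noteq> 0 \<Longrightarrow> fbar h1 q s - fbar h1 q t = (s - t)*(q*s*t - h1)/(q*s*t)"
  by (simp add: fbar_def field_simps; simp add: algebra_simps)

lemma phi_fact:
  assumes "w \<noteq> 0" "h1 \<noteq> 0" "h2 \<noteq> 0" "q \<noteq> 0"
  shows "(x - gg h2 w) * (q * x / h1 - gg h2 w / h2) - (h1 / q - h2) * (q / h1 - 1 / h2)
      = q/h1 * (x - fbar h1 q w) * (x - fbar h1 q (h2/w))"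
  using assms by (simp add: gg_def fbar_def field_simps; simp add: algebra_simps power2_eq_square)

lemma C_g1:
  fixes h1 h2 q z :: complex
  assumes "h1 \<noteq> 0" "h2 \<noteq> 0" "q \<noteq> 0" "z \<noteq> 0" "z^2 \<noteq> h1*q"
  shows "(h1 - h2*q) * z^2 * (z^2 - h1) / (h1^3 * h2^3 * q^5) * ((h1/z)^2+h2)*(h1-h2)*h2^2*q*h2*(h1/z)/(h1/z)^6
     = z^8/((z^2-h1*q)*h1^4*q^4) * gg h2 (h1/z) * (gg h2 (h1/z) - gg h2 z) * (gg h2 (h1/z) - gg h2 (z/q)) * (q/h1)"
proof -
  have e1: "gg h2 (h1/z) - gg h2 z = (h1/z - z)*(h1/z*z - h2)/(h1/z*z)" by (rule gg_diff) (use assms in auto)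
  have e2: "gg h2 (h1/z) - gg h2 (z/q) = (h1/z - z/q)*(h1/z*(z/q) - h2)/(h1/z*(z/q))" by (rule gg_diff) (use assms in auto)
  have "z^2 - h1*q \<noteq> 0" using assms by simp
  show ?thesis unfolding e1 e2 using assms \<open>z^2 - h1*q \<noteq> 0\<close>
    by (simp add: gg_def field_simps; simp add: algebra_simps power2_eq_square power3_eq_cube numeral_eq_Suc)
qed

lemma C_g2:
  fixes h1 h2 q z :: complex
  assumes "h1 \<noteq> 0" "h2 \<noteq> 0" "q \<noteq> 0" "z \<noteq> 0" "q*z^2 \<noteq> h1"
  shows "(h1 - h2*q) * z^2 * (z^2 - h1) / (h1^3 * h2^3 * q^5) * (z^2+h2)*(h1-h2)*h2^2*q*h2*z/z^6
     = 1/(q^4*(q*z^2-h1)) * gg h2 z * (gg h2 z - gg h2 (h1/z)) * (gg h2 z - gg h2 (h1/(q*z))) * (q/h1)"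
proof -
  have e1: "gg h2 z - gg h2 (h1/z) = (z - h1/z)*(z*(h1/z) - h2)/(z*(h1/z))" by (rule gg_diff) (use assms in auto)
  have e2: "gg h2 z - gg h2 (h1/(q*z)) = (z - h1/(q*z))*(z*(h1/(q*z)) - h2)/(z*(h1/(q*z)))" by (rule gg_diff) (use assms in auto)
  have "q*z^2 - h1 \<noteq> 0" using assms by simp
  show ?thesis unfolding e1 e2 using assms \<open>q*z^2 - h1 \<noteq> 0\<close>
    by (simp add: gg_def field_simps; simp add: algebra_simps power2_eq_square power3_eq_cube numeral_eq_Suc)
qed

lemma Lfact: "w \<noteq> 0 \<Longrightarrow> h2 \<noteq> 0 \<Longrightarrow> q \<noteq> 0 \<Longrightarrow>
   (q*h2 - h1)*(w^2 - h2) + (x - fbar h1 q w)*q*h2*w = q*h2*w*(x - fbar h1 q (h2/w))"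
  by (simp add: fbar_def field_simps; simp add: algebra_simps power2_eq_square)

lemma VV_zero: "h1 \<noteq> 0 \<Longrightarrow> h2 \<noteq> 0 \<Longrightarrow> qq h1 h2 u \<noteq> 0 \<Longrightarrow> VV h1 h2 u x f 0 = 0"
  unfolding VV_def Pd_def Pn_def Let_def
  by (simp add: field_simps; simp add: algebra_simps power2_eq_square power3_eq_cube numeral_eq_Suc)

lemma curve_alg:
  fixes P Xa Xb y d1 d2 n3 n4 C1 C2 A1 A2 K V Y0 Y1 Y2 :: complex
  assumes "Xa \<noteq> 0" "Xb \<noteq> 0" "P \<noteq> 0" "y \<noteq> 0" "d1 \<noteq> 0" "d2 \<noteq> 0"
  shows "P*Xa*Xb*(C1*(Y0 - A1*(n3/d1)*Y1)/Xa + C2*(Y2 - A2*(n4/d2)*Y1)/Xb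
           + K*V*Y1/(y*d1*d2*P))
   = Y0*C1*P*Xb + Y2*C2*P*Xa + Y1*(K*Xa*Xb*V - C1*A1*Xb*y*d2*n3*P - C2*A2*Xa*y*d1*n4*P)/(y*d1*d2)"
  using assms by (simp add: field_simps)

locale gen =
  fixes h1 h2 :: complex and u :: "nat \<Rightarrow> complex" and z Y0 Y1 Y2 :: complex
  assumes h1: "h1 \<noteq> 0" and h2: "h2 \<noteq> 0" and z0: "z \<noteq> 0"
    and Y0: "Y0 \<noteq> 0" and Y1: "Y1 \<noteq> 0" and Y2: "Y2 \<noteq> 0"
    and unz: "\<forall>i\<in>{1..8}. u i \<noteq> 0"
    and qh: "qq h1 h2 u * h2 \<noteq> h1"
    and zq1: "z^2 \<noteq> h1 * qq h1 h2 u" and zq2: "qq h1 h2 u * z^2 \<noteq> h1"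
    and Uzq: "UU u (z / qq h1 h2 u) \<noteq> 0" and Uhqz: "UU u (h1 / (qq h1 h2 u * z)) \<noteq> 0"
    and g1nz: "gg h2 (h1/z) \<noteq> 0" and g2nz: "gg h2 z \<noteq> 0" and g12: "gg h2 (h1/z) \<noteq> gg h2 z"
    and w2a: "(h1/z)^2 \<noteq> h2" and w2b: "z^2 \<noteq> h2"
begin

definition "q = qq h1 h2 u"
definition "a = fbar h1 q (z/q)"
definition "b = fbar h1 q z"
definition "g1 = gg h2 (h1/z)"
definition "g2 = gg h2 z"
definition "g3 = gg h2 (z/q)"
definition "g4 = gg h2 (h1/(q*z))"
definition "C1 = UU u (z/q) / (z^2 - h1*q)"
definition "A1 = z^8/(h1^4*q^4) * (UU u (h1/z) / UU u (z/q))"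
definition "C2 = z^8 * UU u (h1/(q*z)) / ((q*z^2 - h1)*h1^4)"
definition "A2 = h1^4/(q^4*z^8) * (UU u z / UU u (h1/(q*z)))"
definition "K = (h1 - h2*q)*z^2*(z^2-h1)/(h1^3*h2^3*q^5)"
definition "ph x y = phiu h1 h2 u x y"
definition "W x y = K*(x-a)*(x-b)*VV h1 h2 u x (ff h1 z) y - C1*A1*(x-b)*y*(y-g2)*(y-g3)*ph x y
                    - C2*A2*(x-a)*y*(y-g1)*(y-g4)*ph x y"
definition "Ep x y = Y0*C1*ph x y*(x-b) + Y2*C2*ph x y*(x-a) + Y1*W x y/(y*(y-g1)*(y-g2))"

lemma q0: "q \<noteq> 0"
  using h1 h2 unz by (simp add: q_def qq_def)

lemma L1u_split:
  "L1u h1 h2 u z Y0 Y1 Y2 x y = C1*(Y0 - A1*((y-g3)/(y-g1))*Y1)/(x-a)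
     + C2*(Y2 - A2*((y-g4)/(y-g2))*Y1)/(x-b)
     + K*VV h1 h2 u x (ff h1 z) y*Y1/(y*(y-g1)*(y-g2)*ph x y)"
  unfolding L1u_def Let_def q_def[symmetric] C1_def A1_def C2_def A2_def K_def a_def b_def
     g1_def g2_def g3_def g4_def ph_def
  by (simp add: field_simps)

lemma curveE_Ep:
  assumes "curve_dom h1 h2 u z x y"
  shows "curveE h1 h2 u z Y0 Y1 Y2 x y = Ep x y"
proof -
  have d: "x \<noteq> a" "x \<noteq> b" "y \<noteq> 0" "ph x y \<noteq> 0" "y \<noteq> g1" "y \<noteq> g2"
    using assms unfolding curve_dom_def Let_def q_def[symmetric] a_def b_def g1_def g2_def ph_def by auto
  have "curveE h1 h2 u z Y0 Y1 Y2 x y = ph x y * (x - a) * (x - b) * L1u h1 h2 u z Y0 Y1 Y2 x y"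
    unfolding curveE_def Let_def q_def[symmetric] a_def b_def ph_def ..
  also have "\<dots> = Ep x y"
    unfolding L1u_split Ep_def W_def using d
    by (subst curve_alg) (auto simp: mult_ac)
  finally show ?thesis .
qed

lemma W_0: "W x 0 = 0"
  unfolding W_def using VV_zero[OF h1 h2, of u] q0 by (simp add: q_def)

lemma fbar_a: "fbar h1 q (h1/z) = a"
  unfolding a_def fbar_def using z0 q0 h1 by (simp add: field_simps)

lemma ff_sym: "ff h1 (h1/z) = ff h1 z"
  unfolding ff_def using z0 h1 by (simp add: field_simps)

lemma W_alg:
  fixes K Xa Xb X' U L0 r R G s T Q :: complex
  assumes "K*L0*r = R*G*s"
  shows "K*Xa*Xb*(U*L0*(r*X')) - (R*U)*Xb*G*(s*Xa*X') - T*0 = 0"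
proof -
  have "K*Xa*Xb*(U*L0*(r*X')) - (R*U)*Xb*G*(s*Xa*X') = Xa*Xb*X'*U*(K*L0*r - R*G*s)"
    by (simp add: algebra_simps)
  thus ?thesis using assms by simp
qed

lemma W_g1:
  assumes w2: "(h1/z)^2 \<noteq> h2"
  shows "W x g1 = 0"
proof -
  define w where "w = h1/z"
  have w0: "w \<noteq> 0" using h1 z0 by (simp add: w_def)
  define L0 where "L0 = (w^2+h2)*(h1-h2)*h2^2/w^6"
  define R where "R = z^8/((z^2-h1*q)*h1^4*q^4)"
  define G where "G = g1*(g1-g2)*(g1-g3)"
  define X' where "X' = x - fbar h1 q (h2/w)"
  define r where "r = q*h2*w"
  define s where "s = q/h1"
  have V: "VV h1 h2 u x (ff h1 z) g1 = UU u w * L0 * (r*X')"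
    unfolding g1_def ff_sym[symmetric] w_def[symmetric] VV_diag[OF w0 h1 h2 q0 w2[folded w_def] q_def]
      Lfact[OF w0 h2 q0] L0_def r_def X'_def by simp
  have P: "ph x g1 = s * (x - a) * X'"
    unfolding ph_def phiu_def Let_def q_def[symmetric] g1_def w_def[symmetric] phi_fact[OF w0 h1 h2 q0]
    unfolding w_def fbar_a s_def X'_def ..
  have CA: "C1*A1 = R * UU u w"
    unfolding C1_def A1_def R_def w_def using Uzq zq1 h1 q0 by (simp add: q_def field_simps)
  have C: "K*L0*r = R*G*s"
    unfolding K_def L0_def r_def R_def G_def s_def g1_def g2_def g3_def w_def
    using C_g1[OF h1 h2 q0 z0] zq1 by (simp add: q_def mult_ac)
  have "W x g1 = K*(x-a)*(x-b)*(UU u w * L0 * (r*X')) - (R*UU u w)*(x-b)*G*(s*(x-a)*X') - (C2*A2*(x-a)*g1*(g1-g4)*ph x g1)*0"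
    unfolding W_def V P[symmetric] CA[symmetric] G_def by (simp add: mult_ac)
  also have "\<dots> = 0" by (rule W_alg[OF C])
  finally show ?thesis .
qed

lemma fbar_b: "fbar h1 q z = b"
  unfolding b_def ..

lemma W_g2:
  assumes w2: "z^2 \<noteq> h2"
  shows "W x g2 = 0"
proof -
  define L0 where "L0 = (z^2+h2)*(h1-h2)*h2^2/z^6"
  define R where "R = 1/(q^4*(q*z^2-h1))"
  define G where "G = g2*(g2-g1)*(g2-g4)"
  define X' where "X' = x - fbar h1 q (h2/z)"
  define r where "r = q*h2*z"
  define s where "s = q/h1"
  have V: "VV h1 h2 u x (ff h1 z) g2 = UU u z * L0 * (r*X')"
    unfolding g2_def VV_diag[OF z0 h1 h2 q0 w2 q_def] Lfact[OF z0 h2 q0] L0_def r_def X'_def by simp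
  have P: "ph x g2 = s * (x - b) * X'"
    unfolding ph_def phiu_def Let_def q_def[symmetric] g2_def phi_fact[OF z0 h1 h2 q0] fbar_b s_def X'_def ..
  have CA: "C2*A2 = R * UU u z"
    unfolding C2_def A2_def R_def using Uhqz zq2 h1 q0 z0 by (simp add: q_def field_simps)
  have C: "K*L0*r = R*G*s"
    unfolding K_def L0_def r_def R_def G_def s_def g1_def g2_def g4_def
    using C_g2[OF h1 h2 q0 z0] zq2 by (simp add: q_def mult_ac)
  have "W x g2 = K*(x-b)*(x-a)*(UU u z * L0 * (r*X')) - (R*UU u z)*(x-a)*G*(s*(x-b)*X') - (C1*A1*(x-b)*g2*(g2-g3)*ph x g2)*0"
    unfolding W_def V P[symmetric] CA[symmetric] G_def by (simp add: mult_ac)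
  also have "\<dots> = 0" by (rule W_alg[OF C])
  finally show ?thesis .
qed

end

lemma deg_pCons_le: "degree p \<le> n \<Longrightarrow> degree (pCons a p) \<le> Suc n"
  by (cases "p = 0") (auto simp: degree_pCons_eq)

lemma deg0: "degree [:a:] \<le> 0" by simp

lemma deg1: "degree [:a,b:] \<le> 1" using deg_pCons_le[OF deg0, of a b] by simp
lemma deg2: "degree [:a,b,c:] \<le> 2" using deg_pCons_le[OF deg1] by (simp add: numeral_eq_Suc)
lemma deg3: "degree [:a,b,c,d:] \<le> 3" using deg_pCons_le[OF deg2] by (simp add: numeral_eq_Suc)
lemma deg4: "degree [:a,b,c,d,e:] \<le> 4" using deg_pCons_le[OF deg3] by (simp add: numeral_eq_Suc)

lemma coeff_mult_top:
  fixes p r :: "'a::comm_semiring_1 poly"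
  assumes "degree p \<le> m" "degree r \<le> n"
  shows "coeff (p*r) (m+n) = coeff p m * coeff r n"
proof (cases "degree p = m \<and> degree r = n")
  case True thus ?thesis using coeff_mult_degree_sum[of p r] by simp
next
  case False
  hence "degree p + degree r < m + n" using assms by auto
  hence "coeff (p*r) (m+n) = 0"
    by (intro coeff_eq_0) (meson degree_mult_le le_less_trans)
  moreover have "coeff p m = 0 \<or> coeff r n = 0"
    using False assms by (auto intro: coeff_eq_0 simp: le_less)
  ultimately show ?thesis by auto
qed

lemma degree_drop_top:
  assumes "degree p \<le> Suc n" "coeff p (Suc n) = 0"
  shows "degree p \<le> n"
proof (rule ccontr)
  assume "\<not> degree p \<le> n"
  hence "degree p = Suc n" using assms by simp
  hence "p = 0" using assms(2) by (metis leading_coeff_0_iff)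
  thus False using \<open>degree p = Suc n\<close> by simp
qed

lemma roots_dvd:
  fixes p :: "complex poly"
  assumes "distinct rs" "\<forall>r\<in>set rs. poly p r = 0"
  shows "prod_list (map (\<lambda>r. [:-r,1:]) rs) dvd p"
  using assms
proof (induction rs arbitrary: p)
  case Nil thus ?case by simp
next
  case (Cons r rs)
  have "poly p r = 0" using Cons.prems by simp
  then obtain p' where p: "p = [:-r,1:] * p'" by (metis dvdE poly_eq_0_iff_dvd)
  have "\<forall>r'\<in>set rs. poly p' r' = 0"
  proof
    fix r' assume "r' \<in> set rs"
    hence "poly p r' = 0" "r' \<noteq> r" using Cons.prems by auto
    thus "poly p' r' = 0" unfolding p by simp
  qed
  hence "prod_list (map (\<lambda>r. [:-r,1:]) rs) dvd p'" using Cons by simp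
  thus ?case unfolding p by (simp del: mult_pCons_left add: mult_dvd_mono)
qed

lemma prod_lin_degree: "degree (prod_list (map (\<lambda>r. [:-r,1::complex:]) rs)) = length rs"
  and prod_lin_nz: "prod_list (map (\<lambda>r. [:-r,1::complex:]) rs) \<noteq> 0"
proof (induction rs)
  case Nil { case 1 show ?case by simp next case 2 show ?case by simp }
next
  case (Cons r rs)
  { case 1 show ?case using Cons degree_mult_eq[of "[:-r,1:]" "prod_list (map (\<lambda>r. [:-r,1::complex:]) rs)"]
      by (simp del: mult_pCons_left)
  next case 2 show ?case using Cons by (simp del: mult_pCons_left) }
qed

lemma quot_deg:
  fixes p :: "complex poly"
  assumes "distinct rs" "\<forall>r\<in>set rs. poly p r = 0" "degree p \<le> n + length rs"
  shows "\<exists>Q. degree Q \<le> n \<and> p = prod_list (map (\<lambda>r. [:-r,1:]) rs) * Q"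
proof -
  obtain Q where Q: "p = prod_list (map (\<lambda>r. [:-r,1:]) rs) * Q" using roots_dvd[OF assms(1,2)] by (metis dvdE)
  have "degree Q \<le> n"
  proof (cases "Q = 0")
    case False
    hence "degree p = length rs + degree Q" unfolding Q using prod_lin_nz prod_lin_degree
      by (simp add: degree_mult_eq)
    thus ?thesis using assms(3) by simp
  qed simp
  thus ?thesis using Q by blast
qed

context gen begin

definition "Pdp = (let m = mm u in [: h2^6*m 0 - h2^5*m 2 + h2^4*m 4 - h2^3*m 6 + h2^2*m 8,
   2*h2^2*m 7 - h2^3*m 5 + h2^5*m 1, h2^2*m 6 - 3*h2*m 8 - h2^5*m 0, - h2*m 7, m 8 :])"
definition "Pnp = (let m = mm u in [: h2^2*m 0 - h2*m 2 + m 4 - m 6/h2 + m 8/h2^2,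
   2*h2*m 1 - m 3 + m 7/h2^2, m 2 - 3*h2*m 0 - m 8/h2^3, - m 1, m 0 :])"
definition "k1 = (h1/q - h2)*(h1-h2)*(1/h2)"
definition "k2 = (q/h1 - 1/h2)*(1/h1-1/h2)*h2"
definition "k0 = (h1/q - h2)*(q/h1 - 1/h2)"
definition "X1p x f = [: x*f - k1, -(x+f), 1 :]"
definition "X2p x f = [: x*q/h1*(f/h1) - k2, -(x*q/h1/h2 + f/h1/h2), 1/h2^2 :]"
definition "Vp x f = smult q (X1p x f * Pdp) - smult (h1^2*h2^4) (X2p x f * Pnp)"
definition "phip x = [: q*x^2/h1 - k0, -(x*q/h1 + x/h2), 1/h2 :]"
definition "Wp x = smult (K*(x-a)*(x-b)) (Vp x (ff h1 z))
   - smult (C1*A1*(x-b)) ([:0,1:]*[:-g2,1:]*[:-g3,1:]*phip x)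
   - smult (C2*A2*(x-a)) ([:0,1:]*[:-g1,1:]*[:-g4,1:]*phip x)"

lemma poly_Pdp: "poly Pdp y = Pd u h2 y"
  unfolding Pdp_def Pd_def Let_def by (simp add: algebra_simps power2_eq_square power3_eq_cube power4_eq_xxxx)

lemma poly_Pnp: "poly Pnp y = Pn u h2 y"
  unfolding Pnp_def Pn_def Let_def by (simp add: algebra_simps power2_eq_square power3_eq_cube power4_eq_xxxx)

lemma poly_Vp: "poly (Vp x f) y = VV h1 h2 u x f y"
proof -
  have "poly (Vp x f) y = q * poly (X1p x f) y * Pd u h2 y - h1^2*h2^4 * poly (X2p x f) y * Pn u h2 y"
    unfolding Vp_def by (simp add: poly_Pdp poly_Pnp)
  also have "poly (X1p x f) y = (x - y) * (f - y) - (h1 / q - h2) * (h1 - h2) * (1 / h2)"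
    unfolding X1p_def k1_def by (simp add: algebra_simps)
  also have "poly (X2p x f) y = (x * q / h1 - y / h2) * (f / h1 - y / h2) - (q / h1 - 1 / h2) * (1 / h1 - 1 / h2) * h2"
    unfolding X2p_def k2_def using h1 h2 by (simp add: field_simps power2_eq_square)
  finally show ?thesis unfolding VV_def Let_def q_def .
qed

lemma poly_phip: "poly (phip x) y = ph x y"
  unfolding phip_def ph_def phiu_def Let_def q_def[symmetric] k0_def
  using h1 h2 by (simp add: field_simps power2_eq_square)

lemma qm8: "q * mm u 8 = h1^2*h2^2"
  unfolding q_def qq_def mm8 using unz by (simp add: field_simps)

lemma deg_Vp: "degree (Vp x f) \<le> 5"
proof (rule degree_drop_top)
  have a: "degree (X1p x f) \<le> 2" "degree (X2p x f) \<le> 2" "degree Pdp \<le> 4" "degree Pnp \<le> 4"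
    unfolding X1p_def X2p_def Pdp_def Pnp_def Let_def by (rule deg2 deg4)+
  have "degree (X1p x f * Pdp) \<le> 6" "degree (X2p x f * Pnp) \<le> 6"
    using degree_mult_le[of "X1p x f" Pdp] degree_mult_le[of "X2p x f" Pnp] a by linarith+
  hence "degree (smult q (X1p x f * Pdp)) \<le> 6" "degree (smult (h1^2*h2^4) (X2p x f * Pnp)) \<le> 6"
    using degree_smult_le order_trans by blast+
  thus "degree (Vp x f) \<le> Suc 5" unfolding Vp_def
    using degree_diff_le[of "smult q (X1p x f * Pdp)" 6 "smult (h1^2*h2^4) (X2p x f * Pnp)"] by simp
  have "coeff (X1p x f * Pdp) (2+4) = coeff (X1p x f) 2 * coeff Pdp 4" by (rule coeff_mult_top[OF a(1,3)])
  moreover have "coeff (X2p x f * Pnp) (2+4) = coeff (X2p x f) 2 * coeff Pnp 4" by (rule coeff_mult_top[OF a(2,4)])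
  ultimately show "coeff (Vp x f) (Suc 5) = 0"
    unfolding Vp_def using qm8 h2 by (simp add: X1p_def X2p_def Pdp_def Pnp_def Let_def mm0 field_simps power2_eq_square numeral_eq_Suc)
qed

lemma poly_Wp: "poly (Wp x) y = W x y"
  unfolding Wp_def W_def by (simp add: poly_Vp poly_phip algebra_simps)

lemma deg_Wp: "degree (Wp x) \<le> 2 + length [0, g1, g2]"
proof -
  have p: "degree (phip x) \<le> 2" unfolding phip_def by (rule deg2)
  have l: "degree ([:c,1::complex:]) \<le> 1" for c by (rule deg1)
  have t: "degree ([:0,1:]*[:-c,1:]*[:-d,1:]*phip x) \<le> 5" for c d :: complex
  proof -
    have "degree ([:0,1:]*[:-c,1:]*[:-d,1:]*phip x) \<le> degree ([:0,1::complex:]) + degree [:-c,1:] + degree [:-d,1:] + degree (phip x)"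
      by (meson add_le_mono degree_mult_le le_refl order.trans)
    thus ?thesis using l[of 0] l[of "-c"] l[of "-d"] p by simp
  qed
  have "degree (smult (K*(x-a)*(x-b)) (Vp x (ff h1 z))) \<le> 5"
    using deg_Vp degree_smult_le order.trans by blast
  moreover have "degree (smult (C1*A1*(x-b)) ([:0,1:]*[:-g2,1:]*[:-g3,1:]*phip x)) \<le> 5"
    using t degree_smult_le order.trans by blast
  moreover have "degree (smult (C2*A2*(x-a)) ([:0,1:]*[:-g1,1:]*[:-g4,1:]*phip x)) \<le> 5"
    using t degree_smult_le order.trans by blast
  ultimately have "degree (Wp x) \<le> 5" unfolding Wp_def
    by (meson degree_diff_le)
  thus ?thesis by simp
qed

lemma g_distinct: "distinct [0, g1, g2]"
  using g1nz g2nz g12 by (simp add: g1_def g2_def)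

lemma Ep_poly_y: "\<exists>Q. degree Q \<le> 2 \<and> (\<forall>y. y \<noteq> 0 \<longrightarrow> y \<noteq> g1 \<longrightarrow> y \<noteq> g2 \<longrightarrow> Ep x y = poly Q y)"
proof -
  have r: "\<forall>r\<in>set [0, g1, g2]. poly (Wp x) r = 0"
    using W_0 W_g1[OF w2a] W_g2[OF w2b] by (simp add: poly_Wp)
  obtain Q where Q: "degree Q \<le> 2" "Wp x = prod_list (map (\<lambda>r. [:-r,1:]) [0, g1, g2]) * Q"
    using quot_deg[OF g_distinct r deg_Wp] by blast
  let ?P = "smult (Y0*C1*(x-b)) (phip x) + smult (Y2*C2*(x-a)) (phip x) + smult Y1 Q"
  have "degree ?P \<le> 2"
  proof -
    have p: "degree (phip x) \<le> 2" unfolding phip_def by (rule deg2)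
    have "degree (smult (Y0*C1*(x-b)) (phip x)) \<le> 2" "degree (smult (Y2*C2*(x-a)) (phip x)) \<le> 2"
      "degree (smult Y1 Q) \<le> 2"
      using p Q(1) degree_smult_le order.trans by blast+
    thus ?thesis by (meson degree_add_le)
  qed
  moreover have "Ep x y = poly ?P y" if "y \<noteq> 0" "y \<noteq> g1" "y \<noteq> g2" for y
  proof -
    have "W x y = y * (y - g1) * (y - g2) * poly Q y"
      using arg_cong[OF Q(2), of "\<lambda>p. poly p y"] by (simp add: poly_Wp algebra_simps)
    thus ?thesis unfolding Ep_def using that by (simp add: poly_phip)
  qed
  ultimately show ?thesis by blast
qed

end

lemma ds: "degree (p::complex poly) \<le> n \<Longrightarrow> degree (smult c p) \<le> n"
  by (rule order.trans[OF degree_smult_le])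
lemma dm: "degree (p::complex poly) \<le> m \<Longrightarrow> degree r \<le> n \<Longrightarrow> degree (p*r) \<le> m+n"
  by (rule order.trans[OF degree_mult_le]) (rule add_mono)
lemma dadd: "degree (p::complex poly) \<le> n \<Longrightarrow> degree r \<le> n \<Longrightarrow> degree (p+r) \<le> n"
  by (meson degree_add_le)
lemma ddiff: "degree (p::complex poly) \<le> n \<Longrightarrow> degree r \<le> n \<Longrightarrow> degree (p-r) \<le> n"
  by (meson degree_diff_le)

definition lc :: "nat \<Rightarrow> nat \<Rightarrow> complex" where
  "lc k i = (if k = 0 then [1, -11/6, 1, -1/6] ! i else if k = 1 then [0, 3, -5/2, 1/2] ! i
     else if k = 2 then [0, -3/2, 2, -1/2] ! i else [0, 1/3, -1/2, 1/6] ! i)"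

lemma poly_deg3: "degree (P::complex poly) \<le> 3 \<Longrightarrow> poly P x = (\<Sum>i\<le>3. coeff P i * x^i)"
proof -
  assume d: "degree P \<le> 3"
  have "poly P x = (\<Sum>i\<le>degree P. coeff P i * x^i)" by (rule poly_altdef)
  also have "\<dots> = (\<Sum>i\<le>3. coeff P i * x^i)"
    by (rule sum.mono_neutral_left) (use d in \<open>auto simp: coeff_eq_0\<close>)
  finally show ?thesis .
qed

lemma lagrange3:
  fixes P :: "complex poly"
  assumes "degree P \<le> 3"
  shows "poly P x = (\<Sum>k<4. poly P (of_nat k) * (\<Sum>i\<le>3. lc k i * x^i))"
  unfolding poly_deg3[OF assms]
  by (simp add: lc_def numeral_eq_Suc lessThan_Suc atMost_Suc algebra_simps power2_eq_square power3_eq_cube)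

context gen begin

definition "phix y = [: y^2/h2 - k0, -(y/h2 + q*y/h1), q/h1 :]"
definition "Vx y = (let f = ff h1 z; PD = Pd u h2 y; PN = Pn u h2 y; H = h1^2*h2^4 in
  [: q*((0 - y)*(f-y) - k1)*PD - H*((0 - y/h2)*(f/h1 - y/h2) - k2)*PN,
     q*(f-y)*PD - H*(q/h1)*(f/h1 - y/h2)*PN :])"

lemma poly_phix: "poly (phix y) x = ph x y"
  unfolding phix_def ph_def phiu_def Let_def q_def[symmetric] k0_def
  using h1 h2 by (simp add: field_simps power2_eq_square)

lemma aff2: "(al*((0-y)*be - ga)*P - de*((0-T)*e - ka)*N) + x*(al*be*P - de*S*e*N)
   = al*((x - y)*be - ga)*P - de*((x*S - T)*e - ka)*N"
  for al y be ga P de T e ka N x S :: complex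
  by (simp add: algebra_simps)

lemma poly_Vx: "poly (Vx y) x = VV h1 h2 u x (ff h1 z) y"
proof -
  have "poly (Vx y) x = q*((x - y)*(ff h1 z - y) - k1)*Pd u h2 y
     - (h1^2*h2^4)*((x*(q/h1) - y/h2)*(ff h1 z/h1 - y/h2) - k2)*Pn u h2 y"
    unfolding Vx_def Let_def poly_pCons poly_0 mult_zero_right add_0_right by (rule aff2)
  thus ?thesis unfolding VV_def Let_def q_def[symmetric] k1_def k2_def by simp
qed

lemma Ep_poly_x: "\<exists>P. degree P \<le> 3 \<and> (\<forall>x. Ep x y = poly P x)"
proof -
  let ?P = "smult (Y0*C1) (phix y * [:-b,1:]) + smult (Y2*C2) (phix y * [:-a,1:])
     + smult (Y1/(y*(y-g1)*(y-g2))) (smult K ([:-a,1:]*[:-b,1:]*Vx y)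
         - smult (C1*A1*y*(y-g2)*(y-g3)) ([:-b,1:]*phix y) - smult (C2*A2*y*(y-g1)*(y-g4)) ([:-a,1:]*phix y))"
  have p: "degree (phix y) \<le> 2" unfolding phix_def by (rule deg2)
  have v: "degree (Vx y) \<le> 1" unfolding Vx_def Let_def by (rule deg1)
  have l: "degree [:c,1::complex:] \<le> 1" for c by (rule deg1)
  have d1: "degree (phix y * [:-c,1:]) \<le> 3" for c using dm[OF p l[of "-c"]] by (simp del: mult_pCons_right mult_pCons_left)
  have d2: "degree ([:-c,1:] * phix y) \<le> 3" for c using dm[OF l[of "-c"] p] by (simp del: mult_pCons_right mult_pCons_left)
  have d3: "degree ([:-a,1:]*[:-b,1:]*Vx y) \<le> 3" using dm[OF dm[OF l[of "-a"] l[of "-b"]] v]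
    by (simp del: mult_pCons_right mult_pCons_left)
  have "degree ?P \<le> 3"
    by (intro dadd ddiff ds d1 d2 d3)
  moreover have "Ep x y = poly ?P x" for x
  proof -
    have "poly ?P x = Y0*C1*ph x y*(x-b) + Y2*C2*ph x y*(x-a) + Y1/(y*(y-g1)*(y-g2)) * W x y"
      unfolding W_def by (simp add: poly_phix poly_Vx algebra_simps)
    thus ?thesis unfolding Ep_def by simp
  qed
  ultimately show ?thesis by blast
qed

definition "Qk k = (SOME Q. degree Q \<le> 2 \<and> (\<forall>y. y \<noteq> 0 \<longrightarrow> y \<noteq> g1 \<longrightarrow> y \<noteq> g2 \<longrightarrow> Ep (of_nat k) y = poly Q y))"
definition "cc i j = (\<Sum>k<4. lc k i * coeff (Qk k) j)"

lemma Qk: "degree (Qk k) \<le> 2" "y \<noteq> 0 \<Longrightarrow> y \<noteq> g1 \<Longrightarrow> y \<noteq> g2 \<Longrightarrow> Ep (of_nat k) y = poly (Qk k) y"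
  using someI_ex[OF Ep_poly_y[of "of_nat k"]] unfolding Qk_def by blast+

lemma Ep_bpoly:
  assumes "y \<noteq> 0" "y \<noteq> g1" "y \<noteq> g2"
  shows "Ep x y = bpoly cc x y"
proof -
  obtain P where P: "degree P \<le> 3" "\<And>x. Ep x y = poly P x" using Ep_poly_x[of y] by blast
  have "Ep x y = (\<Sum>k<4. Ep (of_nat k) y * (\<Sum>i\<le>3. lc k i * x^i))"
    unfolding P(2) by (rule lagrange3[OF P(1)])
  also have "\<dots> = (\<Sum>k<4. (\<Sum>j\<le>2. coeff (Qk k) j * y^j) * (\<Sum>i\<le>3. lc k i * x^i))"
  proof (rule sum.cong[OF refl])
    fix k assume "k \<in> {..<4::nat}"
    have "Ep (of_nat k) y = poly (Qk k) y" using Qk(2)[OF assms] .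
    also have "\<dots> = (\<Sum>j\<le>2. coeff (Qk k) j * y^j)"
    proof -
      have "poly (Qk k) y = (\<Sum>j\<le>degree (Qk k). coeff (Qk k) j * y^j)" by (rule poly_altdef)
      also have "\<dots> = (\<Sum>j\<le>2. coeff (Qk k) j * y^j)"
        by (rule sum.mono_neutral_left) (use Qk(1)[of k] in \<open>auto simp: coeff_eq_0\<close>)
      finally show ?thesis .
    qed
    finally show "Ep (of_nat k) y * (\<Sum>i\<le>3. lc k i * x^i) = (\<Sum>j\<le>2. coeff (Qk k) j * y^j) * (\<Sum>i\<le>3. lc k i * x^i)" by simp
  qed
  also have "\<dots> = bpoly cc x y"
    unfolding bpoly_def cc_def
    by (simp add: numeral_eq_Suc lessThan_Suc atMost_Suc algebra_simps)
  finally show ?thesis .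
qed

end

context gen begin

definition "Mz = q^4*z^8/h1^4 * (UU u (h1/(q*z)) / UU u z)"
definition "Mq = q^4*(z/q)^8/h1^4 * (UU u (h1/(q*(z/q))) / UU u (z/q))"

lemma ph_curve: "w \<noteq> 0 \<Longrightarrow> ph (fbar h1 q w) (gg h2 w) = 0"
  unfolding ph_def phiu_def Let_def q_def[symmetric] using phi_fact[OF _ h1 h2 q0] by simp

lemma UU_root: "i \<in> {1..8} \<Longrightarrow> UU u (u i) = 0"
  unfolding UU_def by (rule prod_zero) auto

end

lemma ex_alg1:
  fixes Y0 Y1 C A X P y d1 d2 n :: complex
  assumes "y \<noteq> 0" "d1 \<noteq> 0" "d2 \<noteq> 0"
  shows "Y0*C*P*X + Y1*(0 - C*A*X*y*d2*n*P)/(y*d1*d2) = P*X*C*(Y0 - Y1*A*(n/d1))"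
  using assms by (simp add: field_simps)

lemma ex_alg2:
  fixes Y0 Y1 C A X P y d1 d2 n :: complex
  assumes "y \<noteq> 0" "d1 \<noteq> 0" "d2 \<noteq> 0"
  shows "Y0*C*P*X + Y1*(0 - C*A*X*y*d1*n*P)/(y*d1*d2) = P*X*C*(Y0 - Y1*A*(n/d2))"
  using assms by (simp add: field_simps)

locale gen2 = gen +
  assumes ugg: "\<forall>i\<in>{1..8}. gg h2 (u i) \<noteq> 0 \<and> gg h2 (u i) \<noteq> g1 \<and> gg h2 (u i) \<noteq> g2 \<and> (u i)^2 \<noteq> h2"
    and g3c: "g3 \<noteq> 0" "g3 \<noteq> g1" "g3 \<noteq> g2"
    and g4c: "g4 \<noteq> 0" "g4 \<noteq> g1" "g4 \<noteq> g2"
    and Uz: "UU u z \<noteq> 0" and Uhz: "UU u (h1/z) \<noteq> 0"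
    and Mzc: "Mz \<noteq> Y1/Y2" "(Mz*g2 - Y1/Y2*g4)/(Mz - Y1/Y2) \<noteq> 0" "(Mz*g2 - Y1/Y2*g4)/(Mz - Y1/Y2) \<noteq> g1"
    and Mqc: "Mq \<noteq> Y0/Y1" "(Mq*g3 - Y0/Y1*g1)/(Mq - Y0/Y1) \<noteq> 0" "(Mq*g3 - Y0/Y1*g1)/(Mq - Y0/Y1) \<noteq> g2"
begin

lemma bpoly_Ep: "y \<noteq> 0 \<Longrightarrow> y \<noteq> g1 \<Longrightarrow> y \<noteq> g2 \<Longrightarrow> bpoly cc x y = Ep x y"
  using Ep_bpoly by simp

lemma pts_u: "i \<in> {1..8} \<Longrightarrow> bpoly cc (fbar h1 q (u i)) (gg h2 (u i)) = 0"
proof -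
  assume i: "i \<in> {1..8}"
  have c: "gg h2 (u i) \<noteq> 0" "gg h2 (u i) \<noteq> g1" "gg h2 (u i) \<noteq> g2" "(u i)^2 \<noteq> h2" "u i \<noteq> 0"
    using ugg unz i by auto
  have V: "VV h1 h2 u (fbar h1 q (u i)) (ff h1 z) (gg h2 (u i)) = 0"
    unfolding VV_curve[OF c(5) h1 h2 q0 c(4) q_def] UU_root[OF i] by simp
  show ?thesis unfolding bpoly_Ep[OF c(1-3)] Ep_def W_def ph_curve[OF c(5)] V by simp
qed

lemma fbar_hqz: "fbar h1 q (h1/(q*z)) = b"
  unfolding b_def fbar_def using h1 q0 z0 by (simp add: field_simps)

lemma pts_zq: "bpoly cc a g3 = 0"
proof -
  have "ph a g3 = 0" unfolding a_def g3_def by (rule ph_curve) (use z0 q0 in simp)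
  thus ?thesis unfolding bpoly_Ep[OF g3c] Ep_def W_def by simp
qed

lemma pts_hqz: "bpoly cc b g4 = 0"
proof -
  have "ph b g4 = 0" unfolding fbar_hqz[symmetric] g4_def by (rule ph_curve) (use z0 q0 h1 in simp)
  thus ?thesis unfolding bpoly_Ep[OF g4c] Ep_def W_def by simp
qed

lemma A2_Mz: "A2 = 1/Mz"
  unfolding A2_def Mz_def using Uz Uhqz h1 q0 z0 by (simp add: q_def field_simps)

lemma A1_Mq: "A1 = Mq"
proof -
  have "h1/(q*(z/q)) = h1/z" using q0 by simp
  thus ?thesis unfolding A1_def Mq_def using Uzq h1 q0 z0 by (simp add: q_def field_simps)
qed

lemma solve_y:
  fixes M r y c d :: complex
  assumes "M \<noteq> r" "y \<noteq> d" "M * ((y - c)/(y - d)) = r"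
  shows "y = (M*c - r*d)/(M - r)"
proof -
  have "M*(y - c) = r*(y - d)" using assms(2,3) by (simp add: field_simps)
  hence "y*(M - r) = M*c - r*d" by (simp add: algebra_simps)
  thus ?thesis using assms(1) by (simp add: field_simps)
qed

lemma pts_extra_z:
  assumes "extra_pt h1 h2 u z Y1 Y2 y"
  shows "bpoly cc b y = 0"
proof -
  have e: "y \<noteq> g4" "Mz * ((y - g2)/(y - g4)) = Y1/Y2"
    using assms unfolding extra_pt_def Let_def q_def[symmetric] g4_def g2_def Mz_def by (auto simp: mult.assoc)
  have yv: "y = (Mz*g2 - Y1/Y2*g4)/(Mz - Y1/Y2)" by (rule solve_y[OF Mzc(1) e])
  have y0: "y \<noteq> 0" "y \<noteq> g1" using Mzc(2,3) yv by auto
  have y2: "y \<noteq> g2" using e Y1 Y2 by auto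
  have "bpoly cc b y = Y2*C2*ph b y*(b-a) + Y1*(0 - C2*A2*(b-a)*y*(y-g1)*(y-g4)*ph b y)/(y*(y-g1)*(y-g2))"
    unfolding bpoly_Ep[OF y0 y2] Ep_def W_def by simp
  also have "\<dots> = ph b y*(b-a)*C2*(Y2 - Y1*A2*((y-g4)/(y-g2)))"
    by (rule ex_alg2) (use y0 y2 in auto)
  also have "Y1*A2*((y-g4)/(y-g2)) = Y2"
  proof -
    have Mz0: "Mz \<noteq> 0" unfolding Mz_def using Uhqz Uz q0 z0 h1 by (simp add: q_def)
    have "Mz*(y - g2) = Y1/Y2*(y - g4)" using e y2 e(1) by (simp add: field_simps)
    hence "Y1*(y - g4) = Y2*Mz*(y-g2)" using Y2 by (simp add: field_simps)
    thus ?thesis unfolding A2_Mz using Mz0 y2 by (simp add: field_simps)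
  qed
  finally show ?thesis by simp
qed

lemma pts_extra_zq:
  assumes "extra_pt h1 h2 u (z/q) Y0 Y1 y"
  shows "bpoly cc a y = 0"
proof -
  have hz: "h1/(q*(z/q)) = h1/z" using q0 by simp
  have e: "y \<noteq> g1" "Mq * ((y - g3)/(y - g1)) = Y0/Y1"
    using assms unfolding extra_pt_def Let_def q_def[symmetric] g1_def g3_def Mq_def hz
    by (auto simp: mult.assoc hz)
  have yv: "y = (Mq*g3 - Y0/Y1*g1)/(Mq - Y0/Y1)" by (rule solve_y[OF Mqc(1) e])
  have y0: "y \<noteq> 0" "y \<noteq> g2" using Mqc(2,3) yv by auto
  have "bpoly cc a y = Y0*C1*ph a y*(a-b) + Y1*(0 - C1*A1*(a-b)*y*(y-g2)*(y-g3)*ph a y)/(y*(y-g1)*(y-g2))"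
    unfolding bpoly_Ep[OF y0(1) e(1) y0(2)] Ep_def W_def by simp
  also have "\<dots> = ph a y*(a-b)*C1*(Y0 - Y1*A1*((y-g3)/(y-g1)))"
    by (rule ex_alg1) (use y0 e(1) in auto)
  also have "Y1*A1*((y-g3)/(y-g1)) = Y0"
    unfolding A1_Mq using e Y1 by (simp add: field_simps)
  finally show ?thesis by simp
qed

lemma through: "through_pts h1 h2 u z Y0 Y1 Y2 cc"
proof -
  have 1: "bpoly cc (fbar h1 q (z/q)) (gg h2 (z/q)) = 0" using pts_zq unfolding a_def g3_def .
  have 2: "bpoly cc (fbar h1 q (h1/(q*z))) (gg h2 (h1/(q*z))) = 0" using pts_hqz unfolding fbar_hqz g4_def .
  have 3: "extra_pt h1 h2 u z Y1 Y2 y \<Longrightarrow> bpoly cc (fbar h1 q z) y = 0" for y using pts_extra_z unfolding b_def .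
  have 4: "extra_pt h1 h2 u (z/q) Y0 Y1 y \<Longrightarrow> bpoly cc (fbar h1 q (z/q)) y = 0" for y using pts_extra_zq unfolding a_def .
  show ?thesis unfolding through_pts_def Let_def q_def[symmetric] using pts_u 1 2 3 4 by blast
qed

end

lemma finite_sq: "finite {w::complex. w^2 = c}"
proof -
  have "[:-c,0,1:] \<noteq> 0" by simp
  hence "finite {w. poly [:-c,0,1:] w = 0}" by (rule poly_roots_finite)
  moreover have "{w::complex. w^2 = c} = {w. poly [:-c,0,1:] w = 0}" by (auto simp: power2_eq_square algebra_simps)
  ultimately show ?thesis by simp
qed

context gen begin

lemma fbar_image_infinite: "infinite (fbar h1 q ` {w. w \<noteq> 0 \<and> w^2 \<noteq> h1/q})"
proof
  let ?S = "{w. w \<noteq> 0 \<and> w^2 \<noteq> h1/q}"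
  assume fin: "finite (fbar h1 q ` ?S)"
  have sub: "?S \<subseteq> (\<Union>x\<in>fbar h1 q ` ?S. {w. poly [:h1, -q*x, q:] w = 0})"
  proof
    fix w assume w: "w \<in> ?S"
    have "poly [:h1, -q*fbar h1 q w, q:] w = 0"
      using w q0 by (simp add: fbar_def field_simps power2_eq_square)
    thus "w \<in> (\<Union>x\<in>fbar h1 q ` ?S. {w. poly [:h1, -q*x, q:] w = 0})" using w by blast
  qed
  have "finite (\<Union>x\<in>fbar h1 q ` ?S. {w. poly [:h1, -q*x, q:] w = 0})"
    using fin by (rule finite_UN_I) (rule poly_roots_finite, use q0 in simp)
  hence "finite ?S" using sub finite_subset by blast
  moreover have "?S = UNIV - ({0} \<union> {w. w^2 = h1/q})" by auto
  ultimately have "finite (UNIV - ({0} \<union> {w::complex. w^2 = h1/q}))" by simp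
  hence "finite (UNIV::complex set)" using finite_sq[of "h1/q"]
    by (metis Diff_infinite_finite finite.emptyI finite.insertI finite_Un)
  thus False using infinite_UNIV_char_0 by blast
qed

lemma poly_zero_on_fbar:
  assumes "\<And>w. w \<noteq> 0 \<Longrightarrow> w^2 \<noteq> h1/q \<Longrightarrow> poly p (fbar h1 q w) = 0"
  shows "p = 0"
proof (rule ccontr)
  assume "p \<noteq> 0"
  hence "finite {x. poly p x = 0}" by (rule poly_roots_finite)
  moreover have "fbar h1 q ` {w. w \<noteq> 0 \<and> w^2 \<noteq> h1/q} \<subseteq> {x. poly p x = 0}" using assms by auto
  ultimately show False using fbar_image_infinite finite_subset by blast
qed

definition "Ej e j = [: e 0 j, e 1 j, e 2 j, e 3 j :]"
definition "P1 = [: 0, -(q/h1 + 1/h2) :]"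
definition "P0 = [: -k0, 0, q/h1 :]"

lemma Ej_coeff: "i \<le> 3 \<Longrightarrow> coeff (Ej e j) i = e i j"
proof -
  assume "i \<le> 3"
  hence "i = 0 \<or> i = 1 \<or> i = 2 \<or> i = 3" by arith
  thus ?thesis unfolding Ej_def by (auto simp: numeral_eq_Suc)
qed

lemma bpoly_E: "bpoly e x y = poly (Ej e 0) x + poly (Ej e 1) x * y + poly (Ej e 2) x * y^2"
  unfolding bpoly_def Ej_def by (simp add: numeral_eq_Suc atMost_Suc algebra_simps power2_eq_square power3_eq_cube)

lemma ph_P: "ph x y = y^2/h2 + poly P1 x * y + poly P0 x"
  unfolding ph_def phiu_def Let_def q_def[symmetric] P1_def P0_def k0_def
  using h1 h2 by (simp add: field_simps power2_eq_square)

lemma U3: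
  fixes e :: "nat \<Rightarrow> nat \<Rightarrow> complex" and y1 y2 :: complex
  assumes curve: "\<And>w. w \<noteq> 0 \<Longrightarrow> bpoly e (fbar h1 q w) (gg h2 w) = 0"
    and p1: "bpoly e a y1 = 0" "ph a y1 \<noteq> 0" and p2: "bpoly e b y2 = 0" "ph b y2 \<noteq> 0" and ab: "a \<noteq> b"
  shows "\<forall>i\<le>3. \<forall>j\<le>2. e i j = 0"
proof -
  define r1 where "r1 = Ej e 1 - smult h2 (Ej e 2 * P1)"
  define r0 where "r0 = Ej e 0 - smult h2 (Ej e 2 * P0)"
  have dec: "bpoly e x y = h2 * poly (Ej e 2) x * ph x y + poly r1 x * y + poly r0 x" for x y
    unfolding bpoly_E ph_P r1_def r0_def using h2 by (simp add: field_simps power2_eq_square)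
  have oncurve: "poly r1 (fbar h1 q w) * gg h2 w + poly r0 (fbar h1 q w) = 0" if "w \<noteq> 0" for w
    using curve[OF that] dec[of "fbar h1 q w" "gg h2 w"] ph_curve[OF that] by simp
  have r1z: "poly r1 (fbar h1 q w) = 0" if w: "w \<noteq> 0" "w^2 \<noteq> h1/q" for w
  proof -
    let ?w' = "h1/(q*w)"
    have w'0: "?w' \<noteq> 0" using w h1 q0 by simp
    have fb: "fbar h1 q ?w' = fbar h1 q w" using w h1 q0 by (simp add: fbar_def field_simps)
    have "poly r1 (fbar h1 q w) * (gg h2 w - gg h2 ?w') =
      (poly r1 (fbar h1 q w) * gg h2 w + poly r0 (fbar h1 q w)) - (poly r1 (fbar h1 q ?w') * gg h2 ?w' + poly r0 (fbar h1 q ?w'))"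
      unfolding fb by (simp add: algebra_simps)
    also have "\<dots> = 0" using oncurve[OF w(1)] oncurve[OF w'0] by simp
    finally have "poly r1 (fbar h1 q w) * (gg h2 w - gg h2 ?w') = 0" .
    moreover have "gg h2 w - gg h2 ?w' \<noteq> 0"
    proof -
      have "gg h2 w - gg h2 ?w' = (w - ?w')*(w*?w' - h2)/(w*?w')" by (rule gg_diff[OF w(1) w'0])
      moreover have "w - ?w' \<noteq> 0" using w q0 by (auto simp: field_simps power2_eq_square)
      moreover have "w*?w' - h2 \<noteq> 0" using w qh q0 h1 by (auto simp: field_simps q_def)
      ultimately show ?thesis using w w'0 by simp
    qed
    ultimately show ?thesis by simp
  qed
  have r1: "r1 = 0" by (rule poly_zero_on_fbar) (rule r1z)
  have r0: "r0 = 0"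
  proof (rule poly_zero_on_fbar)
    fix w :: complex assume "w \<noteq> 0" "w^2 \<noteq> h1/q"
    thus "poly r0 (fbar h1 q w) = 0" using oncurve[of w] r1z[of w] by simp
  qed
  have E0: "Ej e 0 = smult h2 (Ej e 2 * P0)" using r0 unfolding r0_def by simp
  have E1: "Ej e 1 = smult h2 (Ej e 2 * P1)" using r1 unfolding r1_def by simp
  have dP0: "degree P0 = 2" unfolding P0_def using q0 h1 by simp
  have dE2: "degree (Ej e 2) \<le> 1"
  proof (cases "Ej e 2 = 0")
    case False
    have "degree (Ej e 0) \<le> 3" unfolding Ej_def by (rule deg3)
    moreover have "degree (Ej e 0) = degree (Ej e 2) + 2"
    proof -
      have P0nz: "P0 \<noteq> 0" using dP0 by auto
      have "degree (Ej e 0) = degree (Ej e 2 * P0)" unfolding E0 using h2 by simp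
      also have "\<dots> = degree (Ej e 2) + degree P0" by (rule degree_mult_eq[OF False P0nz])
      finally show ?thesis using dP0 by simp
    qed
    ultimately show ?thesis by simp
  qed simp
  have c23: "e 2 2 = 0" "e 3 2 = 0"
    using coeff_eq_0[of "Ej e 2" 2] coeff_eq_0[of "Ej e 2" 3] dE2 Ej_coeff[of 2 e 2] Ej_coeff[of 3 e 2] by simp_all
  have lin: "bpoly e x y = h2 * (e 0 2 + e 1 2 * x) * ph x y" for x y
  proof -
    have "poly (Ej e 2) x = e 0 2 + e 1 2 * x" unfolding Ej_def c23 by simp
    thus ?thesis using dec[of x y] unfolding r1 r0 by simp
  qed
  have A: "e 0 2 + e 1 2 * a = 0" and B: "e 0 2 + e 1 2 * b = 0"
    using lin[of a y1] lin[of b y2] p1 p2 h2 by auto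
  have "e 1 2 * (a - b) = (e 0 2 + e 1 2 * a) - (e 0 2 + e 1 2 * b)" by (simp add: algebra_simps)
  also have "\<dots> = 0" using A B by simp
  finally have e12: "e 1 2 = 0" using ab by simp
  have e02: "e 0 2 = 0" using e12 A by simp
  have Z: "Ej e 2 = 0" unfolding Ej_def using c23 e12 e02 by simp
  have Z01: "Ej e 0 = 0" "Ej e 1 = 0" using E0 E1 Z by simp_all
  show ?thesis
  proof (intro allI impI)
    fix i j :: nat assume ij: "i \<le> 3" "j \<le> 2"
    hence "j = 0 \<or> j = 1 \<or> j = 2" by arith
    hence "Ej e j = 0" using Z Z01 by auto
    thus "e i j = 0" using Ej_coeff[OF ij(1), of e j] by simp
  qed
qed

end

context gen begin

definition "Rp e = (\<Sum>i\<le>3. \<Sum>j\<le>2. smult (e i j) ([:h1,0,q:]^i * [:0,q:]^(3-i) * [:h2,0,1:]^j * [:0,1:]^(2-j)))"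

lemma poly_Rp:
  assumes w: "w \<noteq> 0"
  shows "poly (Rp e) w = bpoly e (fbar h1 q w) (gg h2 w) * ((q*w)^3 * w^2)"
proof -
  have t: "(h1 + w*(w*q))^i * (w*q)^(3-i) * (h2 + w*w)^j * w^(2-j)
      = fbar h1 q w ^ i * gg h2 w ^ j * ((q*w)^3 * w^2)" if "i \<le> 3" "j \<le> 2" for i j
  proof -
    have f: "h1 + w*(w*q) = fbar h1 q w * (q*w)" using w q0 by (simp add: fbar_def field_simps)
    have g: "h2 + w*w = gg h2 w * w" using w by (simp add: gg_def field_simps)
    have "(h1 + w*(w*q))^i * (w*q)^(3-i) = fbar h1 q w ^ i * (q*w)^(i + (3-i))"
      unfolding f power_mult_distrib power_add by (simp add: mult_ac)
    moreover have "(h2 + w*w)^j * w^(2-j) = gg h2 w ^ j * w^(j + (2-j))"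
      unfolding g power_mult_distrib power_add by (simp add: mult_ac)
    ultimately show ?thesis using that by (simp add: mult_ac)
  qed
  have "poly (Rp e) w = (\<Sum>i\<le>3. \<Sum>j\<le>2. e i j * ((h1 + w*(w*q))^i * (w*q)^(3-i) * (h2 + w*w)^j * w^(2-j)))"
    unfolding Rp_def by (simp add: poly_sum poly_power mult_ac)
  also have "\<dots> = (\<Sum>i\<le>3. \<Sum>j\<le>2. e i j * (fbar h1 q w ^ i * gg h2 w ^ j * ((q*w)^3 * w^2)))"
    by (intro sum.cong refl) (simp add: t)
  also have "\<dots> = bpoly e (fbar h1 q w) (gg h2 w) * ((q*w)^3 * w^2)"
    unfolding bpoly_def by (simp only: sum_distrib_right mult.assoc)
  finally show ?thesis .
qed

lemma deg_Rp: "degree (Rp e) \<le> 10"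
  unfolding Rp_def
proof (intro degree_sum_le finite_atMost)
  fix i j assume i: "i \<in> {..3::nat}" and j: "j \<in> {..2::nat}"
  have a: "degree ([:h1,0,q:]^i) \<le> 2*i" using degree_power_le[of "[:h1,0,q:]" i] deg2[of h1 0 q] by (metis mult.commute mult_le_mono1 order_trans)
  have b: "degree ([:0,q:]^(3-i)) \<le> 1*(3-i)" using degree_power_le[of "[:0,q:]" "3-i"] deg1[of 0 q] by (metis mult.commute mult_le_mono1 order_trans)
  have c: "degree ([:h2,0,1:]^j) \<le> 2*j" using degree_power_le[of "[:h2,0,1:]" j] deg2[of h2 0 1] by (metis mult.commute mult_le_mono1 order_trans)
  have d: "degree ([:0,1::complex:]^(2-j)) \<le> 1*(2-j)" using degree_power_le[of "[:0,1:]" "2-j"] deg1[of 0 1] by (metis mult.commute mult_le_mono1 order_trans)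
  have "degree ([:h1,0,q:]^i * [:0,q:]^(3-i) * [:h2,0,1:]^j * [:0,1:]^(2-j)) \<le> 2*i + 1*(3-i) + 2*j + 1*(2-j)"
    by (rule dm[OF dm[OF dm[OF a b] c] d])
  also have "\<dots> \<le> 10" using i j by simp
  finally show "degree (smult (e i j) ([:h1,0,q:]^i * [:0,q:]^(3-i) * [:h2,0,1:]^j * [:0,1:]^(2-j))) \<le> 10"
    by (rule ds)
qed

lemma bpoly_lin: "bpoly (\<lambda>i j. d i j - s * c i j) x y = bpoly d x y - s * bpoly c x y"
  unfolding bpoly_def by (simp add: sum_subtractf sum_distrib_left algebra_simps)

lemma Rp_zero: "(\<forall>i\<le>3. \<forall>j\<le>2. e i j = 0) \<Longrightarrow> Rp e = 0"
  unfolding Rp_def by simp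

lemma ph_y: "w \<noteq> 0 \<Longrightarrow> ph (fbar h1 q w) y = (y - gg h2 w)*(y - gg h2 (h1/(q*w)))/h2"
  unfolding ph_def phiu_def Let_def q_def[symmetric]
  using h1 h2 q0 by (simp add: fbar_def gg_def field_simps; simp add: algebra_simps power2_eq_square)

end

locale gen3 = gen2 +
  assumes ab: "a \<noteq> b" and g24: "g2 \<noteq> g4" and zh1: "z^2 \<noteq> h1"
    and dist: "distinct [u 1, u 2, u 3, u 4, u 5, u 6, u 7, u 8, z/q, h1/(q*z)]"
begin

definition "rs = [u 1, u 2, u 3, u 4, u 5, u 6, u 7, u 8, z/q, h1/(q*z)]"
definition "NN = prod_list (map (\<lambda>r. [:-r,1:]) rs)"

lemma Rp_N:
  assumes "through_pts h1 h2 u z Y0 Y1 Y2 e"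
  shows "\<exists>l. Rp e = smult l NN"
proof -
  have T: "\<forall>k\<in>{1..8}. bpoly e (fbar h1 q (u k)) (gg h2 (u k)) = 0"
    "bpoly e (fbar h1 q (z/q)) (gg h2 (z/q)) = 0"
    "bpoly e (fbar h1 q (h1/(q*z))) (gg h2 (h1/(q*z))) = 0"
    using assms unfolding through_pts_def Let_def q_def[symmetric] by auto
  have "\<forall>r\<in>set rs. r \<noteq> 0 \<and> bpoly e (fbar h1 q r) (gg h2 r) = 0"
    unfolding rs_def using T unz z0 q0 h1 by auto
  hence r: "\<forall>r\<in>set rs. poly (Rp e) r = 0" using poly_Rp by auto
  have dr: "distinct rs" using dist unfolding rs_def .
  have "length rs = 10" by (simp add: rs_def)
  hence "degree (Rp e) \<le> 0 + length rs" using deg_Rp[of e] by simp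
  then obtain Q where Q: "degree Q \<le> 0" "Rp e = NN * Q" using quot_deg[OF dr r] unfolding NN_def by blast
  obtain c where "Q = [:c:]" using Q(1) degree0_coeffs by blast
  thus ?thesis using Q(2) by (auto simp: mult.commute)
qed

lemma fin_bad: "finite ({0, z/q, h1/z, z, h1/(q*z), h2/z, h2*z/h1} \<union> set rs \<union> {w. w^2 = -h2} \<union> {w. w^2 = h2})"
  using finite_sq by simp

lemma Rp_cc_nz: "Rp cc \<noteq> 0"
proof -
  obtain w where w: "w \<notin> {0, z/q, h1/z, z, h1/(q*z), h2/z, h2*z/h1} \<union> set rs \<union> {w. w^2 = -h2} \<union> {w. w^2 = h2}"
    using ex_new_if_finite[OF infinite_UNIV_char_0 fin_bad] by blast
  have w0: "w \<noteq> 0" and wsq: "w^2 \<noteq> -h2" "w^2 \<noteq> h2" using w by auto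
  let ?x = "fbar h1 q w" and ?y = "gg h2 w"
  have zq0: "z/q \<noteq> 0" "h1/z \<noteq> 0" "h1/(q*z) \<noteq> 0" "h2/z \<noteq> 0" using z0 q0 h1 h2 by auto
  have y0: "?y \<noteq> 0"
  proof
    assume "?y = 0" hence "h2 + w*w = 0" using w0 by (simp add: gg_def field_simps)
    hence "w^2 = -h2" by (simp add: power2_eq_square eq_neg_iff_add_eq_0 add.commute)
    thus False using wsq by simp
  qed
  have y1: "?y \<noteq> g1"
  proof
    assume "?y = g1"
    hence "(w - h1/z)*(w*(h1/z) - h2)/(w*(h1/z)) = 0" using gg_diff[OF w0 zq0(2), of h2] by (simp add: g1_def)
    hence "w = h1/z \<or> w*(h1/z) = h2" using w0 zq0 by auto
    thus False using w h1 z0 by (auto simp: field_simps)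
  qed
  have y2: "?y \<noteq> g2"
  proof
    assume "?y = g2"
    hence "(w - z)*(w*z - h2)/(w*z) = 0" using gg_diff[OF w0 z0, of h2] by (simp add: g2_def)
    hence "w = z \<or> w*z = h2" using w0 z0 by auto
    thus False using w h1 z0 by (auto simp: field_simps)
  qed
  have xa: "?x - a \<noteq> 0"
  proof
    assume "?x - a = 0"
    hence "(w - z/q)*(q*w*(z/q) - h1)/(q*w*(z/q)) = 0" using fbar_diff[OF w0 zq0(1) q0, of h1] by (simp add: a_def)
    hence "w = z/q \<or> q*w*(z/q) = h1" using w0 zq0 q0 by auto
    thus False using w h1 z0 q0 by (auto simp: field_simps)
  qed
  have xb: "?x - b \<noteq> 0"
  proof
    assume "?x - b = 0"
    hence "(w - z)*(q*w*z - h1)/(q*w*z) = 0" using fbar_diff[OF w0 z0 q0, of h1] by (simp add: b_def)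
    hence "w = z \<or> q*w*z = h1" using w0 z0 q0 by auto
    thus False using w h1 z0 q0 by (auto simp: field_simps)
  qed
  have Uw: "UU u w \<noteq> 0"
  proof
    assume "UU u w = 0"
    then obtain i where "i \<in> {1..8}" "w = u i" unfolding UU_def by auto
    hence "w \<in> set rs" unfolding rs_def by (auto simp: numeral_eq_Suc le_Suc_eq)
    thus False using w by auto
  qed
  have quad: "h1*w^2 - h2*ff h1 z*w + h2^2 \<noteq> 0"
  proof
    assume "h1*w^2 - h2*ff h1 z*w + h2^2 = 0"
    moreover have "h1*w^2 - h2*ff h1 z*w + h2^2 = h1*(w - h2/z)*(w - h2*z/h1)"
      using h1 z0 by (simp add: ff_def field_simps; simp add: algebra_simps power2_eq_square)
    ultimately show False using w h1 by auto
  qed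
  have K0: "K \<noteq> 0" unfolding K_def using qh zh1 h1 h2 q0 z0 by (auto simp: q_def mult.commute)
  have V: "VV h1 h2 u ?x (ff h1 z) ?y \<noteq> 0"
    unfolding VV_curve[OF w0 h1 h2 q0 wsq(2) q_def] using Uw h2 qh quad wsq(1) w0
    by (auto simp: q_def add_eq_0_iff)
  have "bpoly cc ?x ?y = Y1 * (K*(?x-a)*(?x-b)*VV h1 h2 u ?x (ff h1 z) ?y) / (?y*(?y-g1)*(?y-g2))"
    unfolding bpoly_Ep[OF y0 y1 y2] Ep_def W_def ph_curve[OF w0] by simp
  moreover have "\<dots> \<noteq> 0" using Y1 K0 xa xb V y0 y1 y2 by simp
  ultimately have "poly (Rp cc) w \<noteq> 0" unfolding poly_Rp[OF w0] using w0 q0 by simp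
  thus ?thesis by auto
qed

lemma ratio_alg: "M \<noteq> 0 \<Longrightarrow> G \<noteq> 0 \<Longrightarrow> D \<noteq> 0 \<Longrightarrow> M * ((r*G/D)/(M*G/D)) = (r::complex)"
  by (simp add: field_simps)

lemma uniq:
  assumes d: "through_pts h1 h2 u z Y0 Y1 Y2 d"
  shows "bpoly_prop d cc"
proof -
  obtain lc where lc: "Rp cc = smult lc NN" using Rp_N[OF through] by blast
  have lc0: "lc \<noteq> 0" using Rp_cc_nz lc by auto
  obtain ld where ld: "Rp d = smult ld NN" using Rp_N[OF d] by blast
  define s where "s = ld/lc"
  define e where "e = (\<lambda>i j. d i j - s * cc i j)"
  have curve: "bpoly e (fbar h1 q w) (gg h2 w) = 0" if w: "w \<noteq> 0" for w
  proof -
    have C: "(q*w)^3 * w^2 \<noteq> 0" using w q0 by simp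
    have "bpoly e (fbar h1 q w) (gg h2 w) * ((q*w)^3 * w^2)
        = poly (Rp d) w - s * poly (Rp cc) w"
      unfolding e_def bpoly_lin poly_Rp[OF w] by (simp add: algebra_simps)
    also have "\<dots> = 0" unfolding ld lc s_def using lc0 by simp
    finally show ?thesis using C by simp
  qed
  have Mz0: "Mz \<noteq> 0" unfolding Mz_def using Uhqz Uz q0 z0 h1 by (simp add: q_def)
  have A1nz: "A1 \<noteq> 0" unfolding A1_def using Uhz Uzq q0 z0 h1 by (simp add: q_def)
  have Mq0: "Mq \<noteq> 0" using A1nz A1_Mq by simp
  define \<rho> where "\<rho> = Y1/Y2"
  define y2 where "y2 = (Mz*g2 - \<rho>*g4)/(Mz - \<rho>)"
  have \<rho>0: "\<rho> \<noteq> 0" using Y1 Y2 by (simp add: \<rho>_def)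
  have Mr: "Mz - \<rho> \<noteq> 0" using Mzc(1) by (simp add: \<rho>_def)
  have y2g4: "y2 - g4 = Mz*(g2 - g4)/(Mz - \<rho>)" unfolding y2_def using Mr by (simp add: field_simps)
  have y2g2: "y2 - g2 = \<rho>*(g2 - g4)/(Mz - \<rho>)" unfolding y2_def using Mr by (simp add: field_simps)
  have ne4: "y2 \<noteq> g4" using y2g4 Mz0 g24 Mr by auto
  have ne2: "y2 \<noteq> g2" using y2g2 \<rho>0 g24 Mr by auto
  have ex2: "extra_pt h1 h2 u z Y1 Y2 y2"
  proof -
    have "Mz * ((y2 - g2)/(y2 - g4)) = \<rho>" unfolding y2g4 y2g2 by (rule ratio_alg) (use Mz0 g24 Mr in auto)
    thus ?thesis unfolding extra_pt_def Let_def q_def[symmetric] using ne4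
      by (simp add: g2_def g4_def Mz_def \<rho>_def mult.assoc)
  qed
  have ph2: "ph b y2 \<noteq> 0" unfolding b_def ph_y[OF z0] using ne2 ne4 h2 by (simp add: g2_def g4_def)
  define \<sigma> where "\<sigma> = Y0/Y1"
  define y1 where "y1 = (Mq*g3 - \<sigma>*g1)/(Mq - \<sigma>)"
  have \<sigma>0: "\<sigma> \<noteq> 0" using Y0 Y1 by (simp add: \<sigma>_def)
  have Ms: "Mq - \<sigma> \<noteq> 0" using Mqc(1) by (simp add: \<sigma>_def)
  have y1g1: "y1 - g1 = Mq*(g3 - g1)/(Mq - \<sigma>)" unfolding y1_def using Ms by (simp add: field_simps)
  have y1g3: "y1 - g3 = \<sigma>*(g3 - g1)/(Mq - \<sigma>)" unfolding y1_def using Ms by (simp add: field_simps)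
  have ne1: "y1 \<noteq> g1" using y1g1 Mq0 g3c(2) Ms by auto
  have ne3: "y1 \<noteq> g3" using y1g3 \<sigma>0 g3c(2) Ms by auto
  have hz: "h1/(q*(z/q)) = h1/z" using q0 by simp
  have ex1: "extra_pt h1 h2 u (z/q) Y0 Y1 y1"
  proof -
    have "Mq * ((y1 - g3)/(y1 - g1)) = \<sigma>" unfolding y1g1 y1g3 by (rule ratio_alg) (use Mq0 g3c(2) Ms in auto)
    thus ?thesis unfolding extra_pt_def Let_def q_def[symmetric] hz using ne1
      using q0 by (simp add: g1_def g3_def Mq_def \<sigma>_def mult.assoc hz)
  qed
  have zq: "z/q \<noteq> 0" using z0 q0 by simp
  have ph1: "ph a y1 \<noteq> 0" unfolding a_def ph_y[OF zq] hz using ne1 ne3 h2 by (simp add: g1_def g3_def)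
  have p1: "bpoly e a y1 = 0"
  proof -
    have "bpoly d a y1 = 0" "bpoly cc a y1 = 0"
      using d through ex1 unfolding through_pts_def Let_def q_def[symmetric] a_def by auto
    thus ?thesis unfolding e_def bpoly_lin by simp
  qed
  have p2: "bpoly e b y2 = 0"
  proof -
    have "bpoly d b y2 = 0" "bpoly cc b y2 = 0"
      using d through ex2 unfolding through_pts_def Let_def q_def[symmetric] b_def by auto
    thus ?thesis unfolding e_def bpoly_lin by simp
  qed
  have "\<forall>i\<le>3. \<forall>j\<le>2. e i j = 0" by (rule U3[OF curve p1 ph1 p2 ph2 ab])
  thus ?thesis unfolding bpoly_prop_def e_def by auto
qed

lemma main: "\<exists>c. bpoly_nonzero c
             \<and> (\<forall>fb g. curve_dom h1 h2 u z fb g \<longrightarrow> curveE h1 h2 u z Y0 Y1 Y2 fb g = bpoly c fb g)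
             \<and> through_pts h1 h2 u z Y0 Y1 Y2 c
             \<and> (\<forall>d. through_pts h1 h2 u z Y0 Y1 Y2 d \<longrightarrow> bpoly_prop d c)"
proof (intro exI conjI allI impI)
  show "bpoly_nonzero cc"
  proof (rule ccontr)
    assume "\<not> bpoly_nonzero cc"
    hence "Rp cc = 0" unfolding bpoly_nonzero_def by (intro Rp_zero) auto
    thus False using Rp_cc_nz by simp
  qed
  fix fb g assume dom: "curve_dom h1 h2 u z fb g"
  hence "g \<noteq> 0" "g \<noteq> g1" "g \<noteq> g2"
    unfolding curve_dom_def Let_def g1_def g2_def by auto
  thus "curveE h1 h2 u z Y0 Y1 Y2 fb g = bpoly cc fb g"
    using curveE_Ep[OF dom] bpoly_Ep by simp
next
  show "through_pts h1 h2 u z Y0 Y1 Y2 cc" by (rule through)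
next
  fix d assume "through_pts h1 h2 u z Y0 Y1 Y2 d"
  thus "bpoly_prop d cc" by (rule uniq)
qed

end

lemma pf_diff: "p \<in> polyfun \<Longrightarrow> r \<in> polyfun \<Longrightarrow> (\<lambda>xs. p xs - r xs) \<in> polyfun"
proof -
  assume "p \<in> polyfun" "r \<in> polyfun"
  hence "(\<lambda>xs. p xs + (\<lambda>xs. -1) xs * r xs) \<in> polyfun" by (intro pf_add pf_mult pf_const)
  thus ?thesis by simp
qed

definition RF :: "(complex list \<Rightarrow> complex) \<Rightarrow> (complex list \<Rightarrow> bool) \<Rightarrow> bool" where
  "RF f d \<longleftrightarrow> (\<exists>N D. N \<in> polyfun \<and> D \<in> polyfun \<and> (\<forall>xs. D xs \<noteq> 0 \<longrightarrow> f xs = N xs / D xs)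
       \<and> (\<forall>xs. d xs \<longrightarrow> D xs \<noteq> 0))"

lemma RF_const: "RF (\<lambda>xs. c) (\<lambda>xs. True)"
  unfolding RF_def by (rule exI[of _ "\<lambda>xs. c"], rule exI[of _ "\<lambda>xs. 1"]) (auto intro: pf_const)

lemma RF_var: "RF (\<lambda>xs. xs ! i) (\<lambda>xs. True)"
  unfolding RF_def by (rule exI[of _ "\<lambda>xs. xs ! i"], rule exI[of _ "\<lambda>xs. 1"]) (auto intro: pf_const pf_var)

lemma RF_add: "RF f d1 \<Longrightarrow> RF g d2 \<Longrightarrow> RF (\<lambda>xs. f xs + g xs) (\<lambda>xs. d1 xs \<and> d2 xs)"
  unfolding RF_def
proof (elim exE conjE)
  fix N1 D1 N2 D2 assume a: "N1 \<in> polyfun" "D1 \<in> polyfun" "\<forall>xs. D1 xs \<noteq> 0 \<longrightarrow> f xs = N1 xs / D1 xs"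
    "\<forall>xs. d1 xs \<longrightarrow> D1 xs \<noteq> 0" "N2 \<in> polyfun" "D2 \<in> polyfun" "\<forall>xs. D2 xs \<noteq> 0 \<longrightarrow> g xs = N2 xs / D2 xs"
    "\<forall>xs. d2 xs \<longrightarrow> D2 xs \<noteq> 0"
  show "\<exists>N D. N \<in> polyfun \<and> D \<in> polyfun \<and> (\<forall>xs. D xs \<noteq> 0 \<longrightarrow> f xs + g xs = N xs / D xs) \<and> (\<forall>xs. d1 xs \<and> d2 xs \<longrightarrow> D xs \<noteq> 0)"
    by (rule exI[of _ "\<lambda>xs. N1 xs * D2 xs + N2 xs * D1 xs"], rule exI[of _ "\<lambda>xs. D1 xs * D2 xs"])
       (use a in \<open>auto intro: pf_add pf_mult simp: field_simps\<close>)
qed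

lemma RF_diff: "RF f d1 \<Longrightarrow> RF g d2 \<Longrightarrow> RF (\<lambda>xs. f xs - g xs) (\<lambda>xs. d1 xs \<and> d2 xs)"
  unfolding RF_def
proof (elim exE conjE)
  fix N1 D1 N2 D2 assume a: "N1 \<in> polyfun" "D1 \<in> polyfun" "\<forall>xs. D1 xs \<noteq> 0 \<longrightarrow> f xs = N1 xs / D1 xs"
    "\<forall>xs. d1 xs \<longrightarrow> D1 xs \<noteq> 0" "N2 \<in> polyfun" "D2 \<in> polyfun" "\<forall>xs. D2 xs \<noteq> 0 \<longrightarrow> g xs = N2 xs / D2 xs"
    "\<forall>xs. d2 xs \<longrightarrow> D2 xs \<noteq> 0"
  show "\<exists>N D. N \<in> polyfun \<and> D \<in> polyfun \<and> (\<forall>xs. D xs \<noteq> 0 \<longrightarrow> f xs - g xs = N xs / D xs) \<and> (\<forall>xs. d1 xs \<and> d2 xs \<longrightarrow> D xs \<noteq> 0)"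
    by (rule exI[of _ "\<lambda>xs. N1 xs * D2 xs - N2 xs * D1 xs"], rule exI[of _ "\<lambda>xs. D1 xs * D2 xs"])
       (use a in \<open>auto intro: pf_diff pf_mult simp: field_simps\<close>)
qed

lemma RF_mult: "RF f d1 \<Longrightarrow> RF g d2 \<Longrightarrow> RF (\<lambda>xs. f xs * g xs) (\<lambda>xs. d1 xs \<and> d2 xs)"
  unfolding RF_def
proof (elim exE conjE)
  fix N1 D1 N2 D2 assume a: "N1 \<in> polyfun" "D1 \<in> polyfun" "\<forall>xs. D1 xs \<noteq> 0 \<longrightarrow> f xs = N1 xs / D1 xs"
    "\<forall>xs. d1 xs \<longrightarrow> D1 xs \<noteq> 0" "N2 \<in> polyfun" "D2 \<in> polyfun" "\<forall>xs. D2 xs \<noteq> 0 \<longrightarrow> g xs = N2 xs / D2 xs"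
    "\<forall>xs. d2 xs \<longrightarrow> D2 xs \<noteq> 0"
  show "\<exists>N D. N \<in> polyfun \<and> D \<in> polyfun \<and> (\<forall>xs. D xs \<noteq> 0 \<longrightarrow> f xs * g xs = N xs / D xs) \<and> (\<forall>xs. d1 xs \<and> d2 xs \<longrightarrow> D xs \<noteq> 0)"
    by (rule exI[of _ "\<lambda>xs. N1 xs * N2 xs"], rule exI[of _ "\<lambda>xs. D1 xs * D2 xs"])
       (use a in \<open>auto intro: pf_mult\<close>)
qed

lemma RF_div: "RF f d1 \<Longrightarrow> RF g d2 \<Longrightarrow> RF (\<lambda>xs. f xs / g xs) (\<lambda>xs. d1 xs \<and> d2 xs \<and> g xs \<noteq> 0)"
  unfolding RF_def
proof (elim exE conjE)
  fix N1 D1 N2 D2 assume a: "N1 \<in> polyfun" "D1 \<in> polyfun" "\<forall>xs. D1 xs \<noteq> 0 \<longrightarrow> f xs = N1 xs / D1 xs"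
    "\<forall>xs. d1 xs \<longrightarrow> D1 xs \<noteq> 0" "N2 \<in> polyfun" "D2 \<in> polyfun" "\<forall>xs. D2 xs \<noteq> 0 \<longrightarrow> g xs = N2 xs / D2 xs"
    "\<forall>xs. d2 xs \<longrightarrow> D2 xs \<noteq> 0"
  have e: "f xs / g xs = N1 xs * D2 xs * D2 xs / (D1 xs * N2 xs * D2 xs)" if "D1 xs * N2 xs * D2 xs \<noteq> 0" for xs
  proof -
    have nz: "D1 xs \<noteq> 0" "N2 xs \<noteq> 0" "D2 xs \<noteq> 0" using that by auto
    have "f xs / g xs = (N1 xs / D1 xs) / (N2 xs / D2 xs)" using a(3,7) nz by simp
    thus ?thesis using nz by (simp add: field_simps)
  qed
  have n: "D1 xs * N2 xs * D2 xs \<noteq> 0" if "d1 xs \<and> d2 xs \<and> g xs \<noteq> 0" for xs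
  proof -
    have nz: "D1 xs \<noteq> 0" "D2 xs \<noteq> 0" using that a(4,8) by auto
    have "N2 xs \<noteq> 0" using that a(7) nz by auto
    thus ?thesis using nz by simp
  qed
  show "\<exists>N D. N \<in> polyfun \<and> D \<in> polyfun \<and> (\<forall>xs. D xs \<noteq> 0 \<longrightarrow> f xs / g xs = N xs / D xs) \<and> (\<forall>xs. d1 xs \<and> d2 xs \<and> g xs \<noteq> 0 \<longrightarrow> D xs \<noteq> 0)"
    by (rule exI[of _ "\<lambda>xs. N1 xs * D2 xs * D2 xs"], rule exI[of _ "\<lambda>xs. D1 xs * N2 xs * D2 xs"])
       (use a e n in \<open>auto intro: pf_mult\<close>)
qed

lemma RF_pow: "RF f d \<Longrightarrow> RF (\<lambda>xs. f xs ^ n) d"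
proof (induction n)
  case 0 show ?case unfolding RF_def
    by (rule exI[of _ "\<lambda>xs. 1"], rule exI[of _ "\<lambda>xs. 1"]) (auto intro: pf_const)
next
  case (Suc n)
  have "RF (\<lambda>xs. f xs * f xs ^ n) (\<lambda>xs. d xs \<and> d xs)" by (rule RF_mult[OF Suc.prems Suc.IH[OF Suc.prems]])
  thus ?case by simp
qed

lemma RF_minus: "RF f d \<Longrightarrow> RF (\<lambda>xs. - f xs) (\<lambda>xs. True \<and> d xs)"
  using RF_diff[OF RF_const[of 0]] by simp

lemmas RF_intros = RF_add RF_diff RF_mult RF_div RF_pow RF_minus RF_var RF_const

definition conds :: "complex \<Rightarrow> complex \<Rightarrow> (nat \<Rightarrow> complex) \<Rightarrow> complex \<Rightarrow> complex \<Rightarrow> complex \<Rightarrow> complex \<Rightarrow> complex" where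
  "conds h1 h2 u z Y0 Y1 Y2 = (let q = qq h1 h2 u; g1 = gg h2 (h1/z); g2 = gg h2 z; g3 = gg h2 (z/q);
     g4 = gg h2 (h1/(q*z)); a = fbar h1 q (z/q); b = fbar h1 q z;
     Mz = q^4*z^8/h1^4 * (UU u (h1/(q*z)) / UU u z);
     Mq = q^4*(z/q)^8/h1^4 * (UU u (h1/(q*(z/q))) / UU u (z/q));
     yz = (Mz*g2 - Y1/Y2*g4)/(Mz - Y1/Y2); yq = (Mq*g3 - Y0/Y1*g1)/(Mq - Y0/Y1) in
   h1*h2*z*Y0*Y1*Y2*(\<Prod>i=1..8. u i) * (q*h2 - h1) * (z^2 - h1*q) * (q*z^2 - h1)
   * UU u (z/q) * UU u (h1/(q*z)) * g1 * g2 * (g1 - g2) * ((h1/z)^2 - h2) * (z^2 - h2)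
   * (\<Prod>i=1..8. gg h2 (u i) * (gg h2 (u i) - g1) * (gg h2 (u i) - g2) * ((u i)^2 - h2))
   * g3*(g3-g1)*(g3-g2)*g4*(g4-g1)*(g4-g2)*UU u z * UU u (h1/z)
   * (Mz - Y1/Y2) * yz * (yz - g1) * (Mq - Y0/Y1) * yq * (yq - g2)
   * (a - b) * (g2 - g4) * (z^2 - h1) * ((u 1 - u 2) * (u 1 - u 3) * (u 1 - u 4) * (u 1 - u 5) * (u 1 - u 6) * (u 1 - u 7) * (u 1 - u 8) * (u 1 - z/q) * (u 1 - h1/(q*z)) * (u 2 - u 3) * (u 2 - u 4) * (u 2 - u 5) * (u 2 - u 6) * (u 2 - u 7) * (u 2 - u 8) * (u 2 - z/q) * (u 2 - h1/(q*z)) * (u 3 - u 4) * (u 3 - u 5) * (u 3 - u 6) * (u 3 - u 7) * (u 3 - u 8) * (u 3 - z/q) * (u 3 - h1/(q*z)) * (u 4 - u 5) * (u 4 - u 6) * (u 4 - u 7) * (u 4 - u 8) * (u 4 - z/q) * (u 4 - h1/(q*z)) * (u 5 - u 6) * (u 5 - u 7) * (u 5 - u 8) * (u 5 - z/q) * (u 5 - h1/(q*z)) * (u 6 - u 7) * (u 6 - u 8) * (u 6 - z/q) * (u 6 - h1/(q*z)) * (u 7 - u 8) * (u 7 - z/q) * (u 7 - h1/(q*z)) * (u 8 - z/q) * (u 8 - h1/(q*z)) * (z/q - h1/(q*z))))"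

lemma nbex: "(\<not>(\<exists>x\<in>A. P x)) = (\<forall>x\<in>A. \<not> P x)" by blast

lemma conds_gen3:
  assumes "conds h1 h2 u z Y0 Y1 Y2 \<noteq> 0"
  shows "gen3 h1 h2 u z Y0 Y1 Y2"
proof -
  note c = assms[unfolded conds_def Let_def mult_eq_0_iff de_Morgan_disj right_minus_eq
      prod_zero_iff[OF finite_atLeastAtMost] nbex]
  have base: "gen h1 h2 u z Y0 Y1 Y2"
    by unfold_locales (use c in blast)+
  interpret gen h1 h2 u z Y0 Y1 Y2 by (rule base)
  show ?thesis
  proof (intro gen3.intro gen2.intro base)
    show "gen2_axioms h1 h2 u z Y0 Y1 Y2"
      unfolding gen2_axioms_def g1_def g2_def g3_def g4_def Mz_def Mq_def q_def
      using c by blast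
    show "gen3_axioms h1 h2 u z"
      unfolding gen3_axioms_def g2_def g4_def a_def b_def q_def
      using c by simp
  qed
qed

lemma prod18: "(\<Prod>i=1..8::nat. f i) = f 1 * f 2 * f 3 * f 4 * f 5 * f 6 * f 7 * (f 8::complex)"
  by (simp add: numeral_eq_Suc atLeastAtMostSuc_conv mult_ac)

definition CF :: "complex list \<Rightarrow> complex" where
  "CF xs = conds (xs!0) (xs!1) (\<lambda>i. xs!(Suc i)) (xs!10) (xs!11) (xs!12) (xs!13)"

schematic_goal CF_RF: "RF CF ?d"
  unfolding CF_def[abs_def] conds_def Let_def qq_def UU_def prod18 gg_def fbar_def
  by (rule RF_intros)+

definition "xs0 = [2, 3, 1, -1, 2, -2, 3, -3, 4, -1/8, 5, 1, 2, 3::complex]"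

lemma CF_xs0: "CF xs0 \<noteq> 0"
  unfolding CF_def xs0_def conds_def Let_def qq_def UU_def prod18 gg_def fbar_def
  by (simp add: nth_Cons' eval_nat_numeral)




lemma conds_cong:
  assumes "\<And>i. i \<in> {1..8} \<Longrightarrow> v i = u i"
  shows "conds h1 h2 v z Y0 Y1 Y2 = conds h1 h2 u z Y0 Y1 Y2"
  unfolding conds_def Let_def qq_def UU_def prod18 using assms by simp

lemma L_nth: "i \<in> {1..8} \<Longrightarrow> [h1, h2, u 1, u 2, u 3, u 4, u 5, u 6, u 7, u 8, z, Y0, Y1, Y2] ! Suc i = (u i :: complex)"
proof -
  assume "i \<in> {1..8}"
  hence "i = 1 \<or> i = 2 \<or> i = 3 \<or> i = 4 \<or> i = 5 \<or> i = 6 \<or> i = 7 \<or> i = 8" by auto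
  thus ?thesis by (auto simp: numeral_eq_Suc)
qed

lemma RF_use:
  assumes "RF f d" "d x0" "f x0 \<noteq> 0"
  shows "\<exists>p\<in>polyfun. p x0 \<noteq> 0 \<and> (\<forall>xs. p xs \<noteq> 0 \<longrightarrow> f xs \<noteq> 0)"
proof -
  obtain N D where N: "N \<in> polyfun" "D \<in> polyfun" and E: "\<forall>xs. D xs \<noteq> 0 \<longrightarrow> f xs = N xs / D xs"
    and Dd: "\<forall>xs. d xs \<longrightarrow> D xs \<noteq> 0"
    using assms(1) unfolding RF_def by blast
  have D0: "D x0 \<noteq> 0" using Dd assms(2) by blast
  have N0: "N x0 \<noteq> 0" using E D0 assms(3) by auto
  show ?thesis
  proof (rule bexI[of _ "\<lambda>xs. N xs * D xs"], intro conjI allI impI)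
    show "N x0 * D x0 \<noteq> 0" using N0 D0 by simp
    fix xs assume "N xs * D xs \<noteq> 0"
    thus "f xs \<noteq> 0" using E by auto
  qed (rule pf_mult[OF N])
qed

theorem lemma2:
  "\<exists>p\<in>polyfun. (\<exists>xs. length xs = 14 \<and> p xs \<noteq> 0) \<and>
     (\<forall>(h1::complex) (h2::complex) (u::nat \<Rightarrow> complex) (z::complex) (Y0::complex) (Y1::complex) (Y2::complex).
        p [h1, h2, u 1, u 2, u 3, u 4, u 5, u 6, u 7, u 8, z, Y0, Y1, Y2] \<noteq> 0 \<longrightarrow>
        (\<exists>c. bpoly_nonzero c
             \<and> (\<forall>fb g. curve_dom h1 h2 u z fb g \<longrightarrow> curveE h1 h2 u z Y0 Y1 Y2 fb g = bpoly c fb g)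
             \<and> through_pts h1 h2 u z Y0 Y1 Y2 c
             \<and> (\<forall>d. through_pts h1 h2 u z Y0 Y1 Y2 d \<longrightarrow> bpoly_prop d c)))"
proof -
  have "\<exists>p\<in>polyfun. p xs0 \<noteq> 0 \<and> (\<forall>xs. p xs \<noteq> 0 \<longrightarrow> CF xs \<noteq> 0)"
    by (rule RF_use[OF CF_RF _ CF_xs0]) (simp add: xs0_def nth_Cons' eval_nat_numeral)
  then obtain p where p: "p \<in> polyfun" "p xs0 \<noteq> 0" "\<And>xs. p xs \<noteq> 0 \<Longrightarrow> CF xs \<noteq> 0" by blast
  show ?thesis
  proof (rule bexI[OF _ p(1)], intro conjI allI impI)
    show "\<exists>xs. length xs = 14 \<and> p xs \<noteq> 0" using p(2) by (intro exI[of _ xs0]) (simp add: xs0_def)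
    fix h1 h2 :: complex and u :: "nat \<Rightarrow> complex" and z Y0 Y1 Y2 :: complex
    assume "p [h1, h2, u 1, u 2, u 3, u 4, u 5, u 6, u 7, u 8, z, Y0, Y1, Y2] \<noteq> 0"
    hence "CF [h1, h2, u 1, u 2, u 3, u 4, u 5, u 6, u 7, u 8, z, Y0, Y1, Y2] \<noteq> 0" by (rule p(3))
    hence "conds h1 h2 u z Y0 Y1 Y2 \<noteq> 0"
      unfolding CF_def using conds_cong[of "\<lambda>i. [h1, h2, u 1, u 2, u 3, u 4, u 5, u 6, u 7, u 8, z, Y0, Y1, Y2] ! Suc i" u h1 h2 z Y0 Y1 Y2]
        L_nth by (simp add: numeral_eq_Suc)
    then interpret gen3 h1 h2 u z Y0 Y1 Y2 by (rule conds_gen3)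
    show "\<exists>c. bpoly_nonzero c
             \<and> (\<forall>fb g. curve_dom h1 h2 u z fb g \<longrightarrow> curveE h1 h2 u z Y0 Y1 Y2 fb g = bpoly c fb g)
             \<and> through_pts h1 h2 u z Y0 Y1 Y2 c
             \<and> (\<forall>d. through_pts h1 h2 u z Y0 Y1 Y2 d \<longrightarrow> bpoly_prop d c)" by (rule main)
  qed
qed

end
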